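(* Let $G=(V,\mathcal E,w)$ be an undirected, connected, weighted graph on $n$ nodes with Laplacian $L$. Fix one of the six uncertainty structures listed in the context, and fix a time-delay $\tau>0$. Suppose the agents are labeled $1,\dots,n$ so that, in the delay-free network ($\tau=0$) with Laplacian $L$, agent $i$ precedes agent $j$ in the order of precedence (i.e. has strictly larger centrality index) if and only if $i<j$. Similarly, suppose the links are labeled $1,\dots,|\mathcal E|$ so that, in the delay-free network, link $e$ has higher rank than link $f$ if and only if $e<f$. Then there exists $\alpha>0$ such that, in the network with all weights scaled by $\alpha$ (Laplacian $\alpha L$) and with time-delay $\tau$, agent $i$ has rank $i$ for every $i\in\{1,\dots,n\}$ and link $e$ has rank $e$ for every $e\in\{1,\dots,|\mathcal E|\}$. In other words, this network has the same order of precedence and ranking as the delay-free network with the same type of uncertainty.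
   Context: Graph matrices: - $E$ is the signed incidence matrix and $W=\mathrm{diag}(w(e))$. - $L=EWE^T$, $\Delta$ is the weighted-degree matrix, $A=\Delta-L$. - $M_n=I_n-\frac1n\mathbf1\mathbf1^T$. - $\lambda_n$ is the largest eigenvalue of the Laplacian in use; the network with delay $\tau$ and Laplacian $\alpha L$ is considered for $\tau\alpha\lambda_n(L)<\pi/2$. The network is $$\dot x(t)=-L\,x(t-\tau)+B\,\xi(t),\qquad y=M_nx,$$ with $\xi$ a vector of mutually independent zero-mean Gaussian white noises with intensities $\sigma_k^2$. The six uncertainty structures are: - agent-associated: dynamics $B=I_n$; sensor $B=L$; receiver $B=\Delta$; emitter $B=A$; - link-associated: communication $B=EW$; measurement $B=-E$. In each case $B$ is built from the (scaled) weights. The performance is $$\rho_{ss}=\lim_{t\to\infty}\mathbb E[y^Ty]=\frac1{2\pi}\int\mathrm{Tr}[G^HG]d\omega,\qquad G(s)=M_n(sI+e^{-\tau s}L)^{-1}B\,\mathrm{diag}(\sigma_k).$$ Agent centrality is $\eta_i=\partial\rho_{ss}/\partial\sigma_i^2$ and link centrality is $\nu_e=\partial\rho_{ss}/\partial\sigma_e^2$, defined for agent- and link-associated structures respectively. Agent $i$ precedes agent $j$ if $\eta_i>\eta_j$; link $e$ has higher rank than link $f$ if $\nu_e>\nu_f$. *)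

theory Defs
  imports "HOL-Analysis.Analysis" "Jordan_Normal_Form.Matrix" "Jordan_Normal_Form.Char_Poly"
    "Jordan_Normal_Form.Gauss_Jordan_Elimination"
begin

text \<open>Link e joins the nodes fst (ends e) and snd (ends e); this pair also fixes the
  (arbitrary) orientation used in the signed incidence matrix.\<close>

definition adjacent :: "nat \<Rightarrow> (nat \<Rightarrow> nat \<times> nat) \<Rightarrow> nat \<Rightarrow> nat \<Rightarrow> bool" where
  "adjacent m ends i j \<longleftrightarrow> (\<exists>e<m. {i, j} = {fst (ends e), snd (ends e)})"

definition connected_weighted_graph ::
  "nat \<Rightarrow> nat \<Rightarrow> (nat \<Rightarrow> nat \<times> nat) \<Rightarrow> (nat \<Rightarrow> real) \<Rightarrow> bool" where
  "connected_weighted_graph n m ends w \<longleftrightarrow>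
     0 < n \<and>
     (\<forall>e<m. fst (ends e) < n \<and> snd (ends e) < n \<and> fst (ends e) \<noteq> snd (ends e) \<and> 0 < w e) \<and>
     (\<forall>e<m. \<forall>f<m. e \<noteq> f \<longrightarrow>
        {fst (ends e), snd (ends e)} \<noteq> {fst (ends f), snd (ends f)}) \<and>
     (\<forall>i<n. \<forall>j<n. (adjacent m ends)\<^sup>*\<^sup>* i j)"

definition incidence :: "nat \<Rightarrow> nat \<Rightarrow> (nat \<Rightarrow> nat \<times> nat) \<Rightarrow> real mat" where
  "incidence n m ends = mat n m (\<lambda>(i, e).
     if i = fst (ends e) then 1 else if i = snd (ends e) then -1 else 0)"

definition weight_mat :: "nat \<Rightarrow> (nat \<Rightarrow> real) \<Rightarrow> real mat" where
  "weight_mat m w = mat_diag m w"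

definition laplacian :: "nat \<Rightarrow> nat \<Rightarrow> (nat \<Rightarrow> nat \<times> nat) \<Rightarrow> (nat \<Rightarrow> real) \<Rightarrow> real mat" where
  "laplacian n m ends w =
     incidence n m ends * weight_mat m w * transpose_mat (incidence n m ends)"

definition degree_mat :: "nat \<Rightarrow> nat \<Rightarrow> (nat \<Rightarrow> nat \<times> nat) \<Rightarrow> (nat \<Rightarrow> real) \<Rightarrow> real mat" where
  "degree_mat n m ends w = mat_diag n (\<lambda>i.
     (\<Sum>e<m. if i = fst (ends e) \<or> i = snd (ends e) then w e else 0))"

definition adjacency_mat :: "nat \<Rightarrow> nat \<Rightarrow> (nat \<Rightarrow> nat \<times> nat) \<Rightarrow> (nat \<Rightarrow> real) \<Rightarrow> real mat" where
  "adjacency_mat n m ends w = degree_mat n m ends w - laplacian n m ends w"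

definition centering :: "nat \<Rightarrow> real mat" where
  "centering n = 1\<^sub>m n - mat n n (\<lambda>_. 1 / real n)"

datatype uncertainty = Dynamics | Sensor | Receiver | Emitter | Communication | Measurement

definition agent_associated :: "uncertainty \<Rightarrow> bool" where
  "agent_associated s \<longleftrightarrow> s \<in> {Dynamics, Sensor, Receiver, Emitter}"

definition link_associated :: "uncertainty \<Rightarrow> bool" where
  "link_associated s \<longleftrightarrow> s \<in> {Communication, Measurement}"

definition noise_input ::
  "uncertainty \<Rightarrow> nat \<Rightarrow> nat \<Rightarrow> (nat \<Rightarrow> nat \<times> nat) \<Rightarrow> (nat \<Rightarrow> real) \<Rightarrow> real mat" where
  "noise_input s n m ends w = (case s of
      Dynamics \<Rightarrow> 1\<^sub>m n
    | Sensor \<Rightarrow> laplacian n m ends w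
    | Receiver \<Rightarrow> degree_mat n m ends w
    | Emitter \<Rightarrow> adjacency_mat n m ends w
    | Communication \<Rightarrow> incidence n m ends * weight_mat m w
    | Measurement \<Rightarrow> - incidence n m ends)"

definition cmat :: "real mat \<Rightarrow> complex mat" where
  "cmat A = map_mat complex_of_real A"

definition conj_transpose :: "complex mat \<Rightarrow> complex mat" where
  "conj_transpose A = mat (dim_col A) (dim_row A) (\<lambda>(i, j). cnj (A $$ (j, i)))"

definition mtrace :: "complex mat \<Rightarrow> complex" where
  "mtrace A = (\<Sum>i<dim_row A. A $$ (i, i))"

definition transfer ::
  "uncertainty \<Rightarrow> nat \<Rightarrow> nat \<Rightarrow> (nat \<Rightarrow> nat \<times> nat) \<Rightarrow> (nat \<Rightarrow> real) \<Rightarrow> real \<Rightarrow>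
   (nat \<Rightarrow> real) \<Rightarrow> real \<Rightarrow> complex mat" where
  "transfer s n m ends w \<tau> \<sigma> \<omega> =
     (let B = noise_input s n m ends w;
          jw = \<i> * complex_of_real \<omega>
      in cmat (centering n)
         * the (mat_inverse (jw \<cdot>\<^sub>m 1\<^sub>m n + exp (- complex_of_real \<tau> * jw) \<cdot>\<^sub>m cmat (laplacian n m ends w)))
         * cmat B * cmat (mat_diag (dim_col B) \<sigma>))"


definition rho_ss ::
  "uncertainty \<Rightarrow> nat \<Rightarrow> nat \<Rightarrow> (nat \<Rightarrow> nat \<times> nat) \<Rightarrow> (nat \<Rightarrow> real) \<Rightarrow> real \<Rightarrow> (nat \<Rightarrow> real) \<Rightarrow> real" where
  "rho_ss s n m ends w \<tau> \<sigma> = 1 / (2 * pi) * integral UNIV (\<lambda>\<omega>::real. Re (mtrace (conj_transpose (transfer s n m ends w \<tau> \<sigma> \<omega>) * transfer s n m ends w \<tau> \<sigma> \<omega>)))"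

text \<open>Centrality index of noise channel k: partial derivative of rho_ss with respect to
  the noise intensity sigma_k^2 (rho_ss is affine in each sigma_k^2, so the base point,
  here all intensities equal to 1, is immaterial). For agent-associated structures
  this is the agent centrality eta_k, for link-associated ones the link centrality nu_k.\<close>

definition centrality ::
  "uncertainty \<Rightarrow> nat \<Rightarrow> nat \<Rightarrow> (nat \<Rightarrow> nat \<times> nat) \<Rightarrow> (nat \<Rightarrow> real) \<Rightarrow> real \<Rightarrow> nat \<Rightarrow> real" where
  "centrality s n m ends w \<tau> k =
     deriv (\<lambda>v. rho_ss s n m ends w \<tau> ((\<lambda>_. 1)(k := sqrt v))) 1"

end

theory Submission imports Defs "HOL-Probability.Sinc_Integral" begin

definition valid_graph :: "nat \<Rightarrow> nat \<Rightarrow> (nat \<Rightarrow> nat \<times> nat) \<Rightarrow> bool" where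
  "valid_graph n m ends \<longleftrightarrow> (\<forall>e<m. fst (ends e) < n \<and> snd (ends e) < n \<and> fst (ends e) \<noteq> snd (ends e))"

definition Qf :: "nat \<Rightarrow> (nat \<Rightarrow> nat \<times> nat) \<Rightarrow> (nat \<Rightarrow> real) \<Rightarrow> (nat \<Rightarrow> complex) \<Rightarrow> real" where
  "Qf m ends w x = (\<Sum>e<m. w e * (cmod (x (fst (ends e)) - x (snd (ends e))))\<^sup>2)"

lemma incidence_dims[simp]: "dim_row (incidence n m ends) = n" "dim_col (incidence n m ends) = m"
  "incidence n m ends \<in> carrier_mat n m"
  by (auto simp: incidence_def)

lemma laplacian_dims[simp]: "dim_row (laplacian n m ends w) = n" "dim_col (laplacian n m ends w) = n"
  "laplacian n m ends w \<in> carrier_mat n n"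
  by (auto simp: laplacian_def weight_mat_def)

lemma laplacian_index: "i < n \<Longrightarrow> j < n \<Longrightarrow> laplacian n m ends w $$ (i,j) =
   (\<Sum>e<m. incidence n m ends $$ (i,e) * w e * incidence n m ends $$ (j,e))"
  unfolding laplacian_def weight_mat_def
  by (simp add: scalar_prod_def mat_diag_def mult_delta_right atLeast0LessThan cong: if_cong)

lemma incidence_index: "valid_graph n m ends \<Longrightarrow> i < n \<Longrightarrow> e < m \<Longrightarrow> incidence n m ends $$ (i,e) =
   (if i = fst (ends e) then 1 else 0) - (if i = snd (ends e) then 1 else 0)"
  by (auto simp: incidence_def valid_graph_def)

lemma sum_incidence:
  fixes f :: "nat \<Rightarrow> 'a::{real_algebra_1,comm_ring_1}"
  assumes v: "valid_graph n m ends" and e: "e < m"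
  shows "(\<Sum>i<n. f i * of_real (incidence n m ends $$ (i,e))) = f (fst (ends e)) - f (snd (ends e))"
proof -
  have ab: "fst (ends e) < n" "snd (ends e) < n" using v e by (auto simp: valid_graph_def)
  have "(\<Sum>i<n. f i * of_real (incidence n m ends $$ (i,e))) =
     (\<Sum>i<n. (if i = fst (ends e) then f i else 0) - (if i = snd (ends e) then f i else 0))"
    by (rule sum.cong) (auto simp: incidence_index[OF v _ e])
  also have "\<dots> = f (fst (ends e)) - f (snd (ends e))"
    using ab by (simp add: sum_subtractf)
  finally show ?thesis .
qed

lemma lap_left:
  fixes f :: "nat \<Rightarrow> 'a::{real_algebra_1,comm_ring_1}"
  assumes v: "valid_graph n m ends" and j: "j < n"
  shows "(\<Sum>i<n. f i * of_real (laplacian n m ends w $$ (i,j))) =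
     (\<Sum>e<m. of_real (w e) * (f (fst (ends e)) - f (snd (ends e))) * of_real (incidence n m ends $$ (j,e)))"
proof -
  have "(\<Sum>i<n. f i * of_real (laplacian n m ends w $$ (i,j))) =
     (\<Sum>i<n. \<Sum>e<m. (f i * of_real (incidence n m ends $$ (i,e))) * (of_real (w e) * of_real (incidence n m ends $$ (j,e))))"
    using j by (simp add: laplacian_index sum_distrib_left mult_ac)
  also have "\<dots> = (\<Sum>e<m. \<Sum>i<n. (f i * of_real (incidence n m ends $$ (i,e))) * (of_real (w e) * of_real (incidence n m ends $$ (j,e))))"
    by (rule sum.swap)
  also have "\<dots> = (\<Sum>e<m. (\<Sum>i<n. f i * of_real (incidence n m ends $$ (i,e))) * (of_real (w e) * of_real (incidence n m ends $$ (j,e))))"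
    by (simp add: sum_distrib_right)
  also have "\<dots> = (\<Sum>e<m. of_real (w e) * (f (fst (ends e)) - f (snd (ends e))) * of_real (incidence n m ends $$ (j,e)))"
    by (rule sum.cong) (auto simp: sum_incidence[OF v] mult_ac)
  finally show ?thesis .
qed

lemma lap_colsum:
  assumes v: "valid_graph n m ends" and j: "j < n"
  shows "(\<Sum>i<n. (of_real (laplacian n m ends w $$ (i,j)) :: 'a::{real_algebra_1,comm_ring_1})) = 0"
  using lap_left[OF v j, of "\<lambda>_. 1 :: 'a" w] by simp

lemma quad_form:
  fixes f g :: "nat \<Rightarrow> 'a::{real_algebra_1,comm_ring_1}"
  assumes v: "valid_graph n m ends"
  shows "(\<Sum>i<n. \<Sum>j<n. f i * of_real (laplacian n m ends w $$ (i,j)) * g j) =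
     (\<Sum>e<m. of_real (w e) * (f (fst (ends e)) - f (snd (ends e))) * (g (fst (ends e)) - g (snd (ends e))))"
proof -
  have "(\<Sum>i<n. \<Sum>j<n. f i * of_real (laplacian n m ends w $$ (i,j)) * g j) =
        (\<Sum>j<n. (\<Sum>i<n. f i * of_real (laplacian n m ends w $$ (i,j))) * g j)"
    by (subst sum.swap) (simp add: sum_distrib_right)
  also have "\<dots> = (\<Sum>j<n. \<Sum>e<m. (of_real (w e) * (f (fst (ends e)) - f (snd (ends e)))) * (g j * of_real (incidence n m ends $$ (j,e))))"
    by (rule sum.cong) (auto simp: lap_left[OF v] sum_distrib_right sum_distrib_left mult_ac)
  also have "\<dots> = (\<Sum>e<m. (of_real (w e) * (f (fst (ends e)) - f (snd (ends e)))) * (\<Sum>j<n. g j * of_real (incidence n m ends $$ (j,e))))"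
    by (subst sum.swap) (simp add: sum_distrib_left)
  also have "\<dots> = (\<Sum>e<m. of_real (w e) * (f (fst (ends e)) - f (snd (ends e))) * (g (fst (ends e)) - g (snd (ends e))))"
    by (rule sum.cong) (auto simp: sum_incidence[OF v])
  finally show ?thesis .
qed

lemma quad_form_complex:
  fixes x :: "nat \<Rightarrow> complex"
  assumes v: "valid_graph n m ends"
  shows "(\<Sum>i<n. \<Sum>j<n. cnj (x i) * of_real (laplacian n m ends w $$ (i,j)) * x j) = of_real (Qf m ends w x)"
proof -
  have "(\<Sum>i<n. \<Sum>j<n. cnj (x i) * of_real (laplacian n m ends w $$ (i,j)) * x j) =
    (\<Sum>e<m. of_real (w e) * (cnj (x (fst (ends e))) - cnj (x (snd (ends e)))) * (x (fst (ends e)) - x (snd (ends e))))"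
    by (rule quad_form[OF v])
  also have "\<dots> = (\<Sum>e<m. of_real (w e * (cmod (x (fst (ends e)) - x (snd (ends e))))\<^sup>2))"
  proof (rule sum.cong)
    fix e
    have "(cnj (x (fst (ends e))) - cnj (x (snd (ends e)))) * (x (fst (ends e)) - x (snd (ends e))) =
      of_real ((cmod (x (fst (ends e)) - x (snd (ends e))))\<^sup>2)"
      by (metis complex_cnj_diff complex_norm_square mult.commute)
    then show "of_real (w e) * (cnj (x (fst (ends e))) - cnj (x (snd (ends e)))) * (x (fst (ends e)) - x (snd (ends e))) =
      of_real (w e * (cmod (x (fst (ends e)) - x (snd (ends e))))\<^sup>2)"
      by (simp add: mult.assoc)
  qed simp
  also have "\<dots> = of_real (Qf m ends w x)" by (simp add: Qf_def)
  finally show ?thesis .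
qed

lemma Qf_nonneg: "(\<And>e. e < m \<Longrightarrow> 0 \<le> w e) \<Longrightarrow> 0 \<le> Qf m ends w x"
  unfolding Qf_def by (intro sum_nonneg) auto

lemma cmod_add_sq_le: "(cmod (u + v))\<^sup>2 \<le> 2 * (cmod u)\<^sup>2 + 2 * (cmod v)\<^sup>2"
proof -
  have "cmod (u + v) \<le> cmod u + cmod v" by (rule norm_triangle_ineq)
  then have "(cmod (u + v))\<^sup>2 \<le> (cmod u + cmod v)\<^sup>2" by (simp add: power_mono)
  also have "\<dots> \<le> 2 * (cmod u)\<^sup>2 + 2 * (cmod v)\<^sup>2"
    using sum_squares_ge_zero[of "cmod u - cmod v" 0] by (simp add: power2_eq_square algebra_simps)
  finally show ?thesis .
qed

lemma path_bound:
  assumes pos: "\<And>e. e < m \<Longrightarrow> 0 < w e" and p: "(adjacent m ends)\<^sup>*\<^sup>* i j"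
  shows "\<exists>C\<ge>0. \<forall>x. (cmod (x i - x j))\<^sup>2 \<le> C * Qf m ends w x"
  using p
proof (induction rule: rtranclp_induct)
  case base
  then show ?case by (auto intro!: exI[of _ 0])
next
  case (step j k)
  from step.IH obtain C where C: "C \<ge> 0" "\<And>x. (cmod (x i - x j))\<^sup>2 \<le> C * Qf m ends w x" by blast
  from step.hyps(2) obtain e where e: "e < m" "{j, k} = {fst (ends e), snd (ends e)}"
    unfolding adjacent_def by blast
  have we: "0 < w e" using pos e by auto
  have jk: "\<And>x. (cmod (x j - x k))\<^sup>2 \<le> (1 / w e) * Qf m ends w x"
  proof -
    fix x :: "nat \<Rightarrow> complex"
    have eq: "cmod (x j - x k) = cmod (x (fst (ends e)) - x (snd (ends e)))"
      using e(2) by (auto simp: doubleton_eq_iff norm_minus_commute)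
    have "w e * (cmod (x (fst (ends e)) - x (snd (ends e))))\<^sup>2 \<le> Qf m ends w x"
      unfolding Qf_def
      by (rule member_le_sum[where f = "\<lambda>e. w e * (cmod (x (fst (ends e)) - x (snd (ends e))))\<^sup>2"])
         (use e in \<open>auto intro: mult_nonneg_nonneg less_imp_le[OF pos]\<close>)
    then show "(cmod (x j - x k))\<^sup>2 \<le> (1 / w e) * Qf m ends w x"
      using we by (simp add: eq field_simps)
  qed
  show ?case
  proof (intro exI[of _ "2 * C + 2 / w e"] conjI allI)
    show "0 \<le> 2 * C + 2 / w e" using C we by simp
    fix x :: "nat \<Rightarrow> complex"
    have "(cmod (x i - x k))\<^sup>2 = (cmod ((x i - x j) + (x j - x k)))\<^sup>2" by simp
    also have "\<dots> \<le> 2 * (cmod (x i - x j))\<^sup>2 + 2 * (cmod (x j - x k))\<^sup>2" by (rule cmod_add_sq_le)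
    also have "\<dots> \<le> 2 * (C * Qf m ends w x) + 2 * ((1 / w e) * Qf m ends w x)"
      using C(2)[of x] jk[of x] by linarith
    also have "\<dots> = (2 * C + 2 / w e) * Qf m ends w x" by (simp add: algebra_simps)
    finally show "(cmod (x i - x k))\<^sup>2 \<le> (2 * C + 2 / w e) * Qf m ends w x" .
  qed
qed

lemma sum_pair_sq:
  fixes u :: "nat \<Rightarrow> real"
  shows "(\<Sum>i<n. \<Sum>j<n. (u i - u j)\<^sup>2) = 2 * real n * (\<Sum>i<n. (u i)\<^sup>2) - 2 * (\<Sum>i<n. u i)\<^sup>2"
proof -
  have "(\<Sum>i<n. \<Sum>j<n. (u i - u j)\<^sup>2) = (\<Sum>i<n. \<Sum>j<n. (u i)\<^sup>2 + (u j)\<^sup>2 - 2 * (u i * u j))"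
    by (simp add: power2_diff mult.assoc)
  also have "\<dots> = (\<Sum>i<n. real n * (u i)\<^sup>2 + (\<Sum>j<n. (u j)\<^sup>2) - 2 * (u i * (\<Sum>j<n. u j)))"
    by (simp add: sum.distrib sum_subtractf sum_distrib_left)
  also have "\<dots> = 2 * real n * (\<Sum>i<n. (u i)\<^sup>2) - 2 * (\<Sum>i<n. u i * (\<Sum>j<n. u j))"
    by (simp add: sum.distrib sum_subtractf sum_distrib_left mult.assoc)
  also have "(\<Sum>i<n. u i * (\<Sum>j<n. u j)) = (\<Sum>i<n. u i)\<^sup>2"
    by (simp add: power2_eq_square sum_distrib_right)
  finally show ?thesis .
qed

lemma sum_pair_cmod:
  fixes x :: "nat \<Rightarrow> complex"
  assumes "(\<Sum>i<n. x i) = 0"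
  shows "(\<Sum>i<n. \<Sum>j<n. (cmod (x i - x j))\<^sup>2) = 2 * real n * (\<Sum>i<n. (cmod (x i))\<^sup>2)"
proof -
  have re: "(\<Sum>i<n. Re (x i)) = 0" and im: "(\<Sum>i<n. Im (x i)) = 0"
    using arg_cong[OF assms, of Re] arg_cong[OF assms, of Im] by (simp_all add: Re_sum Im_sum)
  have "(\<Sum>i<n. \<Sum>j<n. (cmod (x i - x j))\<^sup>2) =
     (\<Sum>i<n. \<Sum>j<n. (Re (x i) - Re (x j))\<^sup>2) + (\<Sum>i<n. \<Sum>j<n. (Im (x i) - Im (x j))\<^sup>2)"
    by (simp add: cmod_power2 sum.distrib)
  also have "\<dots> = 2 * real n * (\<Sum>i<n. (cmod (x i))\<^sup>2)"
    unfolding sum_pair_sq re im by (simp add: cmod_power2 sum.distrib algebra_simps)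
  finally show ?thesis .
qed

lemma kappa_exists:
  assumes g: "connected_weighted_graph n m ends w"
  shows "\<exists>\<kappa>>0. \<forall>x. (\<Sum>i<n. x i) = 0 \<longrightarrow> \<kappa> * (\<Sum>i<n. (cmod (x i))\<^sup>2) \<le> Qf m ends w x"
proof -
  have pos: "\<And>e. e < m \<Longrightarrow> 0 < w e" and n: "0 < n"
    and conn: "\<And>i j. i < n \<Longrightarrow> j < n \<Longrightarrow> (adjacent m ends)\<^sup>*\<^sup>* i j"
    using g unfolding connected_weighted_graph_def by auto
  have "\<forall>p\<in>{..<n}\<times>{..<n}. \<exists>C\<ge>0. \<forall>x. (cmod (x (fst p) - x (snd p)))\<^sup>2 \<le> C * Qf m ends w x"
    using path_bound[OF pos conn] by auto
  then obtain Cf where Cf: "\<And>p. p \<in> {..<n}\<times>{..<n} \<Longrightarrow> Cf p \<ge> 0 \<and>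
      (\<forall>x. (cmod (x (fst p) - x (snd p)))\<^sup>2 \<le> Cf p * Qf m ends w x)"
    by metis
  define C where "C = (\<Sum>p\<in>{..<n}\<times>{..<n}. Cf p)"
  have C0: "C \<ge> 0" unfolding C_def using Cf by (intro sum_nonneg) auto
  have Cle: "Cf p \<le> C" if "p \<in> {..<n}\<times>{..<n}" for p
    unfolding C_def by (rule member_le_sum) (use Cf that in auto)
  define \<kappa> where "\<kappa> = 2 / (real n * C + 1)"
  have kpos: "\<kappa> > 0" unfolding \<kappa>_def using C0 by (simp add: add_nonneg_pos)
  show ?thesis
  proof (intro exI[of _ \<kappa>] conjI allI impI kpos)
    fix x :: "nat \<Rightarrow> complex"
    assume sx: "(\<Sum>i<n. x i) = 0"
    have Q0: "0 \<le> Qf m ends w x" by (rule Qf_nonneg) (use pos in \<open>auto intro: less_imp_le\<close>)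
    have pair: "(cmod (x i - x j))\<^sup>2 \<le> C * Qf m ends w x" if "i < n" "j < n" for i j
    proof -
      have "(cmod (x i - x j))\<^sup>2 \<le> Cf (i,j) * Qf m ends w x" using Cf[of "(i,j)"] that by auto
      also have "\<dots> \<le> C * Qf m ends w x" using Cle[of "(i,j)"] that Q0 by (auto intro: mult_right_mono)
      finally show ?thesis .
    qed
    have "2 * real n * (\<Sum>i<n. (cmod (x i))\<^sup>2) = (\<Sum>i<n. \<Sum>j<n. (cmod (x i - x j))\<^sup>2)"
      using sum_pair_cmod[OF sx] by simp
    also have "\<dots> \<le> (\<Sum>i<n. \<Sum>j<n. C * Qf m ends w x)"
      by (intro sum_mono pair) auto
    also have "\<dots> = real n * (real n * C * Qf m ends w x)" by simp
    finally have "2 * (\<Sum>i<n. (cmod (x i))\<^sup>2) \<le> real n * C * Qf m ends w x"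
      using n by (simp add: mult.assoc)
    also have "\<dots> \<le> (real n * C + 1) * Qf m ends w x" using Q0 by (simp add: algebra_simps)
    finally have A: "2 * (\<Sum>i<n. (cmod (x i))\<^sup>2) \<le> (real n * C + 1) * Qf m ends w x" .
    have d: "real n * C + 1 > 0" using C0 by (simp add: add_nonneg_pos)
    show "\<kappa> * (\<Sum>i<n. (cmod (x i))\<^sup>2) \<le> Qf m ends w x"
      unfolding \<kappa>_def using A d by (simp add: pos_divide_le_eq mult.commute)
  qed
qed

lemma Qf_upper:
  assumes v: "valid_graph n m ends" and w: "\<And>e. e < m \<Longrightarrow> 0 \<le> w e"
  shows "Qf m ends w x \<le> 2 * (\<Sum>e<m. w e) * (\<Sum>i<n. (cmod (x i))\<^sup>2)"
proof -
  have "Qf m ends w x \<le> (\<Sum>e<m. w e * (2 * (\<Sum>i<n. (cmod (x i))\<^sup>2)))"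
    unfolding Qf_def
  proof (intro sum_mono mult_left_mono)
    fix e assume e: "e \<in> {..<m}"
    have ab: "fst (ends e) < n" "snd (ends e) < n" "fst (ends e) \<noteq> snd (ends e)"
      using v e by (auto simp: valid_graph_def)
    have "(cmod (x (fst (ends e)) - x (snd (ends e))))\<^sup>2 \<le> 2 * (cmod (x (fst (ends e))))\<^sup>2 + 2 * (cmod (x (snd (ends e))))\<^sup>2"
      using cmod_add_sq_le[of "x (fst (ends e))" "- x (snd (ends e))"] by simp
    moreover have "(cmod (x (fst (ends e))))\<^sup>2 + (cmod (x (snd (ends e))))\<^sup>2 = (\<Sum>i\<in>{fst (ends e), snd (ends e)}. (cmod (x i))\<^sup>2)"
      using ab by simp
    moreover have "(\<Sum>i\<in>{fst (ends e), snd (ends e)}. (cmod (x i))\<^sup>2) \<le> (\<Sum>i<n. (cmod (x i))\<^sup>2)"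
      by (rule sum_mono2) (use ab in auto)
    ultimately show "(cmod (x (fst (ends e)) - x (snd (ends e))))\<^sup>2 \<le> 2 * (\<Sum>i<n. (cmod (x i))\<^sup>2)"
      by linarith
    show "0 \<le> w e" using w e by auto
  qed
  also have "\<dots> = 2 * (\<Sum>e<m. w e) * (\<Sum>i<n. (cmod (x i))\<^sup>2)"
    by (simp add: sum_distrib_right[symmetric] sum_distrib_left[symmetric] mult_ac)
  finally show ?thesis .
qed

lemma cnj_mult_self: "cnj z * z = complex_of_real ((cmod z)\<^sup>2)"
  by (metis complex_norm_square mult.commute of_real_power)

lemma cs_complex:
  fixes x y :: "nat \<Rightarrow> complex"
  shows "(cmod (\<Sum>i<n. cnj (x i) * y i))\<^sup>2 \<le> (\<Sum>i<n. (cmod (x i))\<^sup>2) * (\<Sum>i<n. (cmod (y i))\<^sup>2)"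
proof -
  have "cmod (\<Sum>i<n. cnj (x i) * y i) \<le> (\<Sum>i<n. cmod (cnj (x i) * y i))" by (rule norm_sum)
  also have "\<dots> = (\<Sum>i<n. cmod (x i) * cmod (y i))" by (simp add: norm_mult)
  finally have "(cmod (\<Sum>i<n. cnj (x i) * y i))\<^sup>2 \<le> (\<Sum>i<n. cmod (x i) * cmod (y i))\<^sup>2"
    by (simp add: power_mono)
  also have "\<dots> \<le> (\<Sum>i<n. (cmod (x i))\<^sup>2) * (\<Sum>i<n. (cmod (y i))\<^sup>2)"
    by (rule Cauchy_Schwarz_ineq_sum)
  finally show ?thesis .
qed

lemma key_bound:
  fixes x y :: "nat \<Rightarrow> complex" and \<omega> \<tau> \<kappa> :: real
  assumes v: "valid_graph n m ends" and w: "\<And>e. e < m \<Longrightarrow> 0 \<le> w e"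
    and kap: "\<And>x. (\<Sum>i<n. x i) = 0 \<Longrightarrow> \<kappa> * (\<Sum>i<n. (cmod (x i))\<^sup>2) \<le> Qf m ends w x"
    and k0: "0 \<le> \<kappa>"
    and eq: "\<And>i. i < n \<Longrightarrow> \<i> * complex_of_real \<omega> * x i +
        exp (- complex_of_real \<tau> * (\<i> * complex_of_real \<omega>)) *
          (\<Sum>j<n. complex_of_real (laplacian n m ends w $$ (i,j)) * x j) = y i"
    and sy: "(\<Sum>i<n. y i) = 0" and om: "\<omega> \<noteq> 0" and t0: "0 \<le> \<tau>"
    and tW: "\<tau> * (2 * (\<Sum>e<m. w e)) \<le> 1/4"
  shows "(\<Sum>i<n. x i) = 0"
    and "(\<kappa>\<^sup>2 + \<omega>\<^sup>2 / 2) * (\<Sum>i<n. (cmod (x i))\<^sup>2) \<le> (\<Sum>i<n. (cmod (y i))\<^sup>2)"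
proof -
  define jw where "jw = \<i> * complex_of_real \<omega>"
  define ex where "ex = exp (- complex_of_real \<tau> * (\<i> * complex_of_real \<omega>))"
  have eq': "\<And>i. i < n \<Longrightarrow> y i = jw * x i + ex * (\<Sum>j<n. complex_of_real (laplacian n m ends w $$ (i,j)) * x j)"
    using eq unfolding jw_def ex_def by auto
  have dsum: "(\<Sum>i<n. \<Sum>j<n. complex_of_real (laplacian n m ends w $$ (i,j)) * x j) = 0"
  proof -
    have "(\<Sum>i<n. \<Sum>j<n. complex_of_real (laplacian n m ends w $$ (i,j)) * x j) =
      (\<Sum>j<n. (\<Sum>i<n. complex_of_real (laplacian n m ends w $$ (i,j))) * x j)"
      by (subst sum.swap) (simp add: sum_distrib_right)
    also have "\<dots> = 0" by (rule sum.neutral) (simp add: lap_colsum[OF v])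
    finally show ?thesis .
  qed
  have "(\<Sum>i<n. y i) = (\<Sum>i<n. jw * x i + ex * (\<Sum>j<n. complex_of_real (laplacian n m ends w $$ (i,j)) * x j))"
    by (rule sum.cong) (auto simp: eq')
  also have "\<dots> = jw * (\<Sum>i<n. x i)"
    by (simp add: sum.distrib sum_distrib_left[symmetric] dsum)
  finally have "jw * (\<Sum>i<n. x i) = 0" using sy by simp
  moreover have "jw \<noteq> 0" using om by (simp add: jw_def)
  ultimately show sx: "(\<Sum>i<n. x i) = 0" by simp
  define s where "s = (\<Sum>i<n. (cmod (x i))\<^sup>2)"
  define Y where "Y = (\<Sum>i<n. (cmod (y i))\<^sup>2)"
  define q where "q = Qf m ends w x"
  define W where "W = (\<Sum>e<m. w e)"
  have s0: "0 \<le> s" unfolding s_def by (intro sum_nonneg) auto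
  have q0: "0 \<le> q" unfolding q_def by (rule Qf_nonneg) (use w in auto)
  have kq: "\<kappa> * s \<le> q" unfolding s_def q_def by (rule kap[OF sx])
  have qW: "q \<le> 2 * W * s" unfolding q_def W_def s_def by (rule Qf_upper[OF v w])
  have P: "(\<Sum>i<n. cnj (x i) * y i) = jw * complex_of_real s + ex * complex_of_real q"
  proof -
    have "(\<Sum>i<n. cnj (x i) * y i) = (\<Sum>i<n. jw * (cnj (x i) * x i) +
       ex * (\<Sum>j<n. cnj (x i) * complex_of_real (laplacian n m ends w $$ (i,j)) * x j))"
      by (rule sum.cong) (auto simp: eq' algebra_simps sum_distrib_left)
    also have "\<dots> = jw * (\<Sum>i<n. cnj (x i) * x i) +
       ex * (\<Sum>i<n. \<Sum>j<n. cnj (x i) * complex_of_real (laplacian n m ends w $$ (i,j)) * x j)"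
      by (simp add: sum.distrib sum_distrib_left)
    also have "\<dots> = jw * complex_of_real s + ex * complex_of_real q"
      unfolding quad_form_complex[OF v] q_def s_def by (simp add: cnj_mult_self)
    finally show ?thesis .
  qed
  define P where "P = jw * complex_of_real s + ex * complex_of_real q"
  have ReP: "Re P = q * cos (\<tau> * \<omega>)" and ImP: "Im P = \<omega> * s - q * sin (\<tau> * \<omega>)"
    unfolding P_def jw_def ex_def by (simp_all add: Re_exp Im_exp)
  have cP: "(cmod P)\<^sup>2 = q\<^sup>2 + \<omega>\<^sup>2 * s\<^sup>2 - 2 * s * q * (\<omega> * sin (\<tau> * \<omega>))"
  proof -
    have "(cmod P)\<^sup>2 = (q * cos (\<tau> * \<omega>))\<^sup>2 + (\<omega> * s - q * sin (\<tau> * \<omega>))\<^sup>2"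
      by (simp add: cmod_power2 ReP ImP)
    also have "\<dots> = q\<^sup>2 * ((sin (\<tau> * \<omega>))\<^sup>2 + (cos (\<tau> * \<omega>))\<^sup>2) + \<omega>\<^sup>2 * s\<^sup>2 - 2 * s * q * (\<omega> * sin (\<tau> * \<omega>))"
      by (simp add: power2_eq_square algebra_simps del: sin_cos_squared_add sin_cos_squared_add2 sin_cos_squared_add3)
    also have "\<dots> = q\<^sup>2 + \<omega>\<^sup>2 * s\<^sup>2 - 2 * s * q * (\<omega> * sin (\<tau> * \<omega>))"
      by simp
    finally show ?thesis .
  qed
  have h1: "\<omega> * sin (\<tau> * \<omega>) \<le> \<tau> * \<omega>\<^sup>2"
  proof -
    have "\<omega> * sin (\<tau> * \<omega>) \<le> \<bar>\<omega>\<bar> * \<bar>sin (\<tau> * \<omega>)\<bar>" by (simp add: abs_mult[symmetric])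
    also have "\<dots> \<le> \<bar>\<omega>\<bar> * \<bar>\<tau> * \<omega>\<bar>" by (intro mult_left_mono abs_sin_x_le_abs_x) auto
    also have "\<dots> = \<tau> * \<omega>\<^sup>2" using t0 by (simp add: abs_mult power2_eq_square)
    finally show ?thesis .
  qed
  have h2: "s * q * (\<omega> * sin (\<tau> * \<omega>)) \<le> s * q * (\<tau> * \<omega>\<^sup>2)"
    by (intro mult_left_mono h1) (use s0 q0 in auto)
  have h3: "s * q * (\<tau> * \<omega>\<^sup>2) \<le> s * (2 * W * s) * (\<tau> * \<omega>\<^sup>2)"
    by (intro mult_right_mono mult_left_mono qW) (use s0 t0 in auto)
  have h4: "s * (2 * W * s) * (\<tau> * \<omega>\<^sup>2) = (\<tau> * (2 * W)) * (\<omega>\<^sup>2 * s\<^sup>2)"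
    by (simp add: power2_eq_square algebra_simps)
  have h5: "(\<tau> * (2 * W)) * (\<omega>\<^sup>2 * s\<^sup>2) \<le> (1/4) * (\<omega>\<^sup>2 * s\<^sup>2)"
    by (intro mult_right_mono) (use tW in \<open>auto simp: W_def\<close>)
  have chain: "2 * s * q * (\<omega> * sin (\<tau> * \<omega>)) \<le> \<omega>\<^sup>2 * s\<^sup>2 / 2"
    using h2 h3 h4 h5 by linarith
  have h6: "\<kappa>\<^sup>2 * s\<^sup>2 \<le> q\<^sup>2"
    using power_mono[OF kq, of 2] k0 s0 by (simp add: power_mult_distrib)
  have e1: "(\<kappa>\<^sup>2 + \<omega>\<^sup>2 / 2) * s\<^sup>2 = \<kappa>\<^sup>2 * s\<^sup>2 + \<omega>\<^sup>2 * s\<^sup>2 / 2"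
    by (simp add: algebra_simps)
  have lower: "(\<kappa>\<^sup>2 + \<omega>\<^sup>2 / 2) * s\<^sup>2 \<le> (cmod P)\<^sup>2"
    unfolding cP e1 using chain h6 by linarith
  have upper: "(cmod P)\<^sup>2 \<le> s * Y"
    using cs_complex[of x y n] P unfolding P_def s_def Y_def by simp
  have "(\<kappa>\<^sup>2 + \<omega>\<^sup>2 / 2) * s \<le> Y"
  proof (cases "s = 0")
    case True then show ?thesis by (simp add: Y_def sum_nonneg)
  next
    case False
    then have sp: "s > 0" using s0 by simp
    have "s * ((\<kappa>\<^sup>2 + \<omega>\<^sup>2 / 2) * s) \<le> s * Y"
      using lower upper by (simp add: power2_eq_square mult_ac)
    then show ?thesis using sp by simp
  qed
  then show "(\<kappa>\<^sup>2 + \<omega>\<^sup>2 / 2) * (\<Sum>i<n. (cmod (x i))\<^sup>2) \<le> (\<Sum>i<n. (cmod (y i))\<^sup>2)"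
    unfolding s_def Y_def .
qed

definition nK :: "uncertainty \<Rightarrow> nat \<Rightarrow> nat \<Rightarrow> nat" where
  "nK s n m = (if link_associated s then m else n)"

lemma degree_mat_carrier[simp]: "degree_mat n m ends w \<in> carrier_mat n n"
  "dim_row (degree_mat n m ends w) = n" "dim_col (degree_mat n m ends w) = n"
  by (simp_all add: degree_mat_def mat_diag_def)

lemma noise_input_carrier: "noise_input s n m ends w \<in> carrier_mat n (nK s n m)"
  by (cases s) (auto simp: noise_input_def nK_def link_associated_def adjacency_mat_def weight_mat_def
      intro!: mult_carrier_mat)

lemma cmat_carrier[simp]: "cmat A \<in> carrier_mat (dim_row A) (dim_col A)"
  "dim_row (cmat A) = dim_row A" "dim_col (cmat A) = dim_col A"
  by (auto simp: cmat_def)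

lemma cmat_index[simp]: "i < dim_row A \<Longrightarrow> j < dim_col A \<Longrightarrow> cmat A $$ (i,j) = complex_of_real (A $$ (i,j))"
  by (simp add: cmat_def)

lemma cmat_mult: "A \<in> carrier_mat nr n \<Longrightarrow> B \<in> carrier_mat n nc \<Longrightarrow> cmat (A * B) = cmat A * cmat B"
  unfolding cmat_def by (rule of_real_hom.mat_hom_mult)

lemma centering_carrier[simp]: "centering n \<in> carrier_mat n n"
  "dim_row (centering n) = n" "dim_col (centering n) = n"
  unfolding centering_def by auto

lemma centering_index: "i < n \<Longrightarrow> j < n \<Longrightarrow> centering n $$ (i,j) = (if i = j then 1 else 0) - 1 / real n"
  unfolding centering_def by (subst index_minus_mat) auto

lemma lap_sym: "i < n \<Longrightarrow> j < n \<Longrightarrow> laplacian n m ends w $$ (i,j) = laplacian n m ends w $$ (j,i)"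
  unfolding laplacian_index by (intro sum.cong refl) (simp add: mult.commute)

lemma centering_lap: assumes v: "valid_graph n m ends"
  shows "centering n * laplacian n m ends w = laplacian n m ends w"
proof (rule eq_matI)
  fix i j assume ij: "i < dim_row (laplacian n m ends w)" "j < dim_col (laplacian n m ends w)"
  then have i: "i < n" and j: "j < n" by auto
  have "(centering n * laplacian n m ends w) $$ (i,j) =
    (\<Sum>k<n. ((if i = k then 1 else 0) - 1 / real n) * laplacian n m ends w $$ (k,j))"
    using i j by (simp add: scalar_prod_def centering_index atLeast0LessThan mult_delta_left mult_delta_right)
  also have "\<dots> = laplacian n m ends w $$ (i,j) - (1 / real n) * (\<Sum>k<n. laplacian n m ends w $$ (k,j))"
    using i by (simp add: left_diff_distrib sum_subtractf sum_distrib_left mult_delta_left)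
  also have "\<dots> = laplacian n m ends w $$ (i,j)"
    using lap_colsum[OF v j, of w, where 'a=real] by simp
  finally show "(centering n * laplacian n m ends w) $$ (i,j) = laplacian n m ends w $$ (i,j)" .
qed auto

lemma lap_centering: assumes v: "valid_graph n m ends"
  shows "laplacian n m ends w * centering n = laplacian n m ends w"
proof (rule eq_matI)
  fix i j assume ij: "i < dim_row (laplacian n m ends w)" "j < dim_col (laplacian n m ends w)"
  then have i: "i < n" and j: "j < n" by auto
  have "(laplacian n m ends w * centering n) $$ (i,j) =
    (\<Sum>k<n. laplacian n m ends w $$ (i,k) * ((if k = j then 1 else 0) - 1 / real n))"
    using i j by (simp add: scalar_prod_def centering_index atLeast0LessThan mult_delta_left mult_delta_right)
  also have "\<dots> = laplacian n m ends w $$ (i,j) - (1 / real n) * (\<Sum>k<n. laplacian n m ends w $$ (i,k))"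
    using j by (simp add: right_diff_distrib sum_subtractf sum_distrib_left mult_delta_left mult.commute)
  also have "(\<Sum>k<n. laplacian n m ends w $$ (i,k)) = (\<Sum>k<n. laplacian n m ends w $$ (k,i))"
    by (rule sum.cong) (auto intro: lap_sym[OF i])
  also have "laplacian n m ends w $$ (i,j) - (1 / real n) * \<dots> = laplacian n m ends w $$ (i,j)"
    using lap_colsum[OF v i, of w, where 'a=real] by simp
  finally show "(laplacian n m ends w * centering n) $$ (i,j) = laplacian n m ends w $$ (i,j)" .
qed auto

definition Xm :: "nat \<Rightarrow> nat \<Rightarrow> (nat \<Rightarrow> nat \<times> nat) \<Rightarrow> (nat \<Rightarrow> real) \<Rightarrow> real \<Rightarrow> real \<Rightarrow> complex mat" where
  "Xm n m ends w \<tau> \<omega> = (\<i> * complex_of_real \<omega>) \<cdot>\<^sub>m 1\<^sub>m n +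
     exp (- complex_of_real \<tau> * (\<i> * complex_of_real \<omega>)) \<cdot>\<^sub>m cmat (laplacian n m ends w)"

definition Rm :: "nat \<Rightarrow> nat \<Rightarrow> (nat \<Rightarrow> nat \<times> nat) \<Rightarrow> (nat \<Rightarrow> real) \<Rightarrow> real \<Rightarrow> real \<Rightarrow> complex mat" where
  "Rm n m ends w \<tau> \<omega> = the (mat_inverse (Xm n m ends w \<tau> \<omega>))"

definition Ym :: "uncertainty \<Rightarrow> nat \<Rightarrow> nat \<Rightarrow> (nat \<Rightarrow> nat \<times> nat) \<Rightarrow> (nat \<Rightarrow> real) \<Rightarrow> complex mat" where
  "Ym s n m ends w = cmat (centering n) * cmat (noise_input s n m ends w)"

definition fk :: "uncertainty \<Rightarrow> nat \<Rightarrow> nat \<Rightarrow> (nat \<Rightarrow> nat \<times> nat) \<Rightarrow> (nat \<Rightarrow> real) \<Rightarrow> real \<Rightarrow> nat \<Rightarrow> real \<Rightarrow> real" where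
  "fk s n m ends w \<tau> k \<omega> = (if \<omega> = 0 then 0 else
     (\<Sum>i<n. (cmod ((Rm n m ends w \<tau> \<omega> * Ym s n m ends w) $$ (i,k)))\<^sup>2))"

lemma Xm_carrier[simp]: "Xm n m ends w \<tau> \<omega> \<in> carrier_mat n n"
  "dim_row (Xm n m ends w \<tau> \<omega>) = n" "dim_col (Xm n m ends w \<tau> \<omega>) = n"
proof -
  have "Xm n m ends w \<tau> \<omega> \<in> carrier_mat n n"
    unfolding Xm_def
    by (intro add_carrier_mat smult_carrier_mat one_carrier_mat carrier_matI) simp_all
  then show "Xm n m ends w \<tau> \<omega> \<in> carrier_mat n n"
    "dim_row (Xm n m ends w \<tau> \<omega>) = n" "dim_col (Xm n m ends w \<tau> \<omega>) = n" by auto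
qed

lemma Ym_carrier[simp]: "Ym s n m ends w \<in> carrier_mat n (nK s n m)"
proof -
  have a: "cmat (centering n) \<in> carrier_mat n n" by (rule carrier_matI) simp_all
  have b: "cmat (noise_input s n m ends w) \<in> carrier_mat n (nK s n m)"
    using noise_input_carrier[of s n m ends w] by (intro carrier_matI) (simp_all add: carrier_matD)
  show ?thesis unfolding Ym_def by (rule mult_carrier_mat[OF a b])
qed

lemma Ym_dims[simp]: "dim_row (Ym s n m ends w) = n" "dim_col (Ym s n m ends w) = nK s n m"
  using carrier_matD[OF Ym_carrier[of s n m ends w]] by simp_all

lemma Xm_index: "i < n \<Longrightarrow> j < n \<Longrightarrow> Xm n m ends w \<tau> \<omega> $$ (i,j) =
   (if i = j then \<i> * complex_of_real \<omega> else 0) +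
   exp (- complex_of_real \<tau> * (\<i> * complex_of_real \<omega>)) * complex_of_real (laplacian n m ends w $$ (i,j))"
  by (simp add: Xm_def)

lemma Xm_mult_index:
  assumes Z: "Z \<in> carrier_mat n K" and i: "i < n" and k: "k < K"
  shows "(Xm n m ends w \<tau> \<omega> * Z) $$ (i,k) = \<i> * complex_of_real \<omega> * Z $$ (i,k) +
     exp (- complex_of_real \<tau> * (\<i> * complex_of_real \<omega>)) *
       (\<Sum>j<n. complex_of_real (laplacian n m ends w $$ (i,j)) * Z $$ (j,k))"
proof -
  have "(Xm n m ends w \<tau> \<omega> * Z) $$ (i,k) = (\<Sum>j<n. Xm n m ends w \<tau> \<omega> $$ (i,j) * Z $$ (j,k))"
    using Z i k by (simp add: scalar_prod_def atLeast0LessThan)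
  also have "\<dots> = (\<Sum>j<n. (if i = j then \<i> * complex_of_real \<omega> * Z $$ (j,k) else 0) +
      exp (- complex_of_real \<tau> * (\<i> * complex_of_real \<omega>)) * (complex_of_real (laplacian n m ends w $$ (i,j)) * Z $$ (j,k)))"
    by (intro sum.cong refl) (simp add: Xm_index i distrib_right mult.assoc)
  also have "\<dots> = \<i> * complex_of_real \<omega> * Z $$ (i,k) +
     exp (- complex_of_real \<tau> * (\<i> * complex_of_real \<omega>)) *
       (\<Sum>j<n. complex_of_real (laplacian n m ends w $$ (i,j)) * Z $$ (j,k))"
    using i by (simp add: sum.distrib sum_distrib_left)
  finally show ?thesis .
qed

lemma Xm_mult_vec_index:
  assumes v: "v \<in> carrier_vec n" and i: "i < n"
  shows "(Xm n m ends w \<tau> \<omega> *\<^sub>v v) $ i = \<i> * complex_of_real \<omega> * v $ i +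
     exp (- complex_of_real \<tau> * (\<i> * complex_of_real \<omega>)) *
       (\<Sum>j<n. complex_of_real (laplacian n m ends w $$ (i,j)) * v $ j)"
proof -
  have "(Xm n m ends w \<tau> \<omega> *\<^sub>v v) $ i = (\<Sum>j<n. Xm n m ends w \<tau> \<omega> $$ (i,j) * v $ j)"
    using v i by (simp add: scalar_prod_def atLeast0LessThan)
  also have "\<dots> = (\<Sum>j<n. (if i = j then \<i> * complex_of_real \<omega> * v $ j else 0) +
      exp (- complex_of_real \<tau> * (\<i> * complex_of_real \<omega>)) * (complex_of_real (laplacian n m ends w $$ (i,j)) * v $ j))"
    by (intro sum.cong refl) (simp add: Xm_index i distrib_right mult.assoc)
  also have "\<dots> = \<i> * complex_of_real \<omega> * v $ i +
     exp (- complex_of_real \<tau> * (\<i> * complex_of_real \<omega>)) *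
       (\<Sum>j<n. complex_of_real (laplacian n m ends w $$ (i,j)) * v $ j)"
    using i by (simp add: sum.distrib sum_distrib_left)
  finally show ?thesis .
qed

definition good :: "nat \<Rightarrow> nat \<Rightarrow> (nat \<Rightarrow> nat \<times> nat) \<Rightarrow> (nat \<Rightarrow> real) \<Rightarrow> real \<Rightarrow> real \<Rightarrow> bool" where
  "good n m ends w \<kappa> \<tau> \<longleftrightarrow> valid_graph n m ends \<and> 0 < n \<and> (\<forall>e<m. 0 \<le> w e) \<and> 0 < \<kappa> \<and>
     (\<forall>x. (\<Sum>i<n. x i) = 0 \<longrightarrow> \<kappa> * (\<Sum>i<n. (cmod (x i))\<^sup>2) \<le> Qf m ends w x) \<and>
     0 \<le> \<tau> \<and> \<tau> * (2 * (\<Sum>e<m. w e)) \<le> 1/4"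

lemma Xm_det_ne:
  assumes g: "good n m ends w \<kappa> \<tau>" and om: "\<omega> \<noteq> 0"
  shows "det (Xm n m ends w \<tau> \<omega>) \<noteq> 0"
proof
  assume "det (Xm n m ends w \<tau> \<omega>) = 0"
  then obtain v where v: "v \<in> carrier_vec n" "v \<noteq> 0\<^sub>v n" "Xm n m ends w \<tau> \<omega> *\<^sub>v v = 0\<^sub>v n"
    using det_0_iff_vec_prod_zero[OF Xm_carrier(1)] by blast
  have gg: "valid_graph n m ends" "\<And>e. e < m \<Longrightarrow> 0 \<le> w e" "0 < \<kappa>"
    "\<And>x. (\<Sum>i<n. x i) = 0 \<Longrightarrow> \<kappa> * (\<Sum>i<n. (cmod (x i))\<^sup>2) \<le> Qf m ends w x"
    "0 \<le> \<tau>" "\<tau> * (2 * (\<Sum>e<m. w e)) \<le> 1/4"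
    using g unfolding good_def by auto
  have eq: "\<And>i. i < n \<Longrightarrow> \<i> * complex_of_real \<omega> * v $ i +
        exp (- complex_of_real \<tau> * (\<i> * complex_of_real \<omega>)) *
          (\<Sum>j<n. complex_of_real (laplacian n m ends w $$ (i,j)) * v $ j) = (\<lambda>_. 0) i"
  proof -
    fix i assume i: "i < n"
    have "(Xm n m ends w \<tau> \<omega> *\<^sub>v v) $ i = 0" using v(3) i by simp
    then show "\<i> * complex_of_real \<omega> * v $ i +
        exp (- complex_of_real \<tau> * (\<i> * complex_of_real \<omega>)) *
          (\<Sum>j<n. complex_of_real (laplacian n m ends w $$ (i,j)) * v $ j) = (\<lambda>_. 0) i"
      unfolding Xm_mult_vec_index[OF v(1) i] by simp
  qed
  have "(\<kappa>\<^sup>2 + \<omega>\<^sup>2 / 2) * (\<Sum>i<n. (cmod (v $ i))\<^sup>2) \<le> (\<Sum>i<n. (cmod ((\<lambda>_. 0::complex) i))\<^sup>2)"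
    by (rule key_bound(2)[OF gg(1,2,4) less_imp_le[OF gg(3)] eq _ om gg(5,6)]) auto
  moreover have "\<kappa>\<^sup>2 + \<omega>\<^sup>2 / 2 > 0" using gg(3) by (simp add: add_pos_nonneg)
  ultimately have "(\<Sum>i<n. (cmod (v $ i))\<^sup>2) \<le> 0"
    by (simp add: mult_le_0_iff)
  then have "(\<Sum>i<n. (cmod (v $ i))\<^sup>2) = 0"
    by (meson order.antisym sum_nonneg zero_le_power2)
  then have "\<forall>i\<in>{..<n}. (cmod (v $ i))\<^sup>2 = 0"
    by (subst (asm) sum_nonneg_eq_0_iff) auto
  then have "v = 0\<^sub>v n" using v(1) by (intro eq_vecI) auto
  with v(2) show False by simp
qed

lemma inv_exists:
  assumes A: "A \<in> carrier_mat n n" and d: "det A \<noteq> (0::complex)"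
  shows "\<exists>B. mat_inverse A = Some B \<and> A * B = 1\<^sub>m n \<and> B * A = 1\<^sub>m n \<and> B \<in> carrier_mat n n"
proof -
  have "A \<in> Units (ring_mat TYPE(complex) n ())" by (rule det_non_zero_imp_unit[OF A d])
  then have "mat_inverse A \<noteq> None" using mat_inverse(1)[OF A, of "()"] by blast
  then obtain B where "mat_inverse A = Some B" by blast
  with mat_inverse(2)[OF A this] show ?thesis by blast
qed

lemma Rm_props:
  assumes g: "good n m ends w \<kappa> \<tau>" and om: "\<omega> \<noteq> 0"
  shows "Xm n m ends w \<tau> \<omega> * Rm n m ends w \<tau> \<omega> = 1\<^sub>m n"
    "Rm n m ends w \<tau> \<omega> * Xm n m ends w \<tau> \<omega> = 1\<^sub>m n"
    "Rm n m ends w \<tau> \<omega> \<in> carrier_mat n n"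
  using inv_exists[OF Xm_carrier(1) Xm_det_ne[OF g om]] unfolding Rm_def by auto

lemma cmat_lap_carrier[simp]: "cmat (laplacian n m ends w) \<in> carrier_mat n n"
  by (rule carrier_matI) simp_all

lemma cmat_centering_carrier[simp]: "cmat (centering n) \<in> carrier_mat n n"
  by (rule carrier_matI) simp_all

lemma Xm_commute:
  assumes v: "valid_graph n m ends"
  shows "cmat (centering n) * Xm n m ends w \<tau> \<omega> = Xm n m ends w \<tau> \<omega> * cmat (centering n)"
proof -
  let ?M = "cmat (centering n)" and ?L = "cmat (laplacian n m ends w)"
  let ?a = "\<i> * complex_of_real \<omega>" and ?b = "exp (- complex_of_real \<tau> * (\<i> * complex_of_real \<omega>))"
  have hML: "?M * ?L = ?L"
    using cmat_mult[of "centering n" n n "laplacian n m ends w" n] centering_lap[OF v] by simp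
  have hLM: "?L * ?M = ?L"
    using cmat_mult[of "laplacian n m ends w" n n "centering n" n] lap_centering[OF v] by simp
  have "?M * Xm n m ends w \<tau> \<omega> = ?M * (?a \<cdot>\<^sub>m 1\<^sub>m n) + ?M * (?b \<cdot>\<^sub>m ?L)"
    unfolding Xm_def by (rule mult_add_distrib_mat[of _ n n]) auto
  also have "\<dots> = ?a \<cdot>\<^sub>m ?M + ?b \<cdot>\<^sub>m ?L"
    using mult_smult_distrib[of ?M n n "1\<^sub>m n" n ?a] mult_smult_distrib[of ?M n n ?L n ?b] hML
    by simp
  also have "\<dots> = (?a \<cdot>\<^sub>m 1\<^sub>m n) * ?M + (?b \<cdot>\<^sub>m ?L) * ?M"
    using mult_smult_assoc_mat[of "1\<^sub>m n" n n ?M n ?a] mult_smult_assoc_mat[of ?L n n ?M n ?b] hLM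
    by simp
  also have "\<dots> = Xm n m ends w \<tau> \<omega> * ?M"
    unfolding Xm_def by (rule add_mult_distrib_mat[symmetric, of _ n n]) auto
  finally show ?thesis .
qed

lemma inverse_commute:
  fixes M X R :: "'a::comm_ring_1 mat"
  assumes M: "M \<in> carrier_mat n n" and X: "X \<in> carrier_mat n n" and R: "R \<in> carrier_mat n n"
    and XR: "X * R = 1\<^sub>m n" and RX: "R * X = 1\<^sub>m n" and MX: "M * X = X * M"
  shows "M * R = R * M"
proof -
  have "M * R = (R * X) * (M * R)" using RX M R by simp
  also have "\<dots> = R * ((X * M) * R)" using M X R by (simp add: assoc_mult_mat[of _ n n _ n _ n])
  also have "\<dots> = R * ((M * X) * R)" using MX by simp
  also have "\<dots> = (R * M) * (X * R)" using M X R by (simp add: assoc_mult_mat[of _ n n _ n _ n])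
  also have "\<dots> = R * M" using XR M R by simp
  finally show ?thesis .
qed

lemma transfer_eq:
  assumes g: "good n m ends w \<kappa> \<tau>" and om: "\<omega> \<noteq> 0"
  shows "transfer s n m ends w \<tau> \<sigma> \<omega> =
    (Rm n m ends w \<tau> \<omega> * Ym s n m ends w) * cmat (mat_diag (nK s n m) \<sigma>)"
proof -
  have v: "valid_graph n m ends" using g by (simp add: good_def)
  note RP = Rm_props[OF g om]
  let ?M = "cmat (centering n)" and ?R = "Rm n m ends w \<tau> \<omega>" and ?B = "cmat (noise_input s n m ends w)"
  have B: "?B \<in> carrier_mat n (nK s n m)"
    using noise_input_carrier[of s n m ends w] by (intro carrier_matI) (simp_all add: carrier_matD)
  have dc: "dim_col (noise_input s n m ends w) = nK s n m"
    using noise_input_carrier[of s n m ends w] by (simp add: carrier_matD)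
  have MR: "?M * ?R = ?R * ?M"
    by (rule inverse_commute[OF cmat_centering_carrier Xm_carrier(1) RP(3) RP(1) RP(2) Xm_commute[OF v]])
  have "transfer s n m ends w \<tau> \<sigma> \<omega> = ?M * ?R * ?B * cmat (mat_diag (nK s n m) \<sigma>)"
    unfolding transfer_def Let_def Rm_def Xm_def dc ..
  also have "?M * ?R * ?B = ?R * (?M * ?B)"
    unfolding MR using RP(3) B by (simp add: assoc_mult_mat[of _ n n _ n _ "nK s n m"])
  finally show ?thesis unfolding Ym_def .
qed

lemma cmat_diag: "cmat (mat_diag K \<sigma>) = mat_diag K (\<lambda>k. complex_of_real (\<sigma> k))"
  by (rule eq_matI) (auto simp: cmat_def mat_diag_def)

lemma trace_formula:
  assumes C: "C \<in> carrier_mat n K"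
  shows "Re (mtrace (conj_transpose (C * cmat (mat_diag K \<sigma>)) * (C * cmat (mat_diag K \<sigma>)))) =
    (\<Sum>k<K. (\<sigma> k)\<^sup>2 * (\<Sum>i<n. (cmod (C $$ (i,k)))\<^sup>2))"
proof -
  define G where "G = C * cmat (mat_diag K \<sigma>)"
  have G: "G = mat n K (\<lambda>(i,j). C $$ (i,j) * complex_of_real (\<sigma> j))"
    unfolding G_def cmat_diag by (rule mat_diag_mult_right[OF C])
  have Gd: "dim_row G = n" "dim_col G = K" by (simp_all add: G)
  have Gi: "\<And>i k. i < n \<Longrightarrow> k < K \<Longrightarrow> G $$ (i,k) = C $$ (i,k) * complex_of_real (\<sigma> k)"
    by (simp add: G)
  have "mtrace (conj_transpose G * G) = (\<Sum>k<K. \<Sum>i<n. cnj (G $$ (i,k)) * G $$ (i,k))"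
    unfolding mtrace_def
    by (intro sum.cong) (auto simp: conj_transpose_def Gd scalar_prod_def atLeast0LessThan)
  also have "\<dots> = (\<Sum>k<K. \<Sum>i<n. complex_of_real ((\<sigma> k)\<^sup>2 * (cmod (C $$ (i,k)))\<^sup>2))"
  proof (intro sum.cong refl)
    fix k i assume k: "k \<in> {..<K}" and i: "i \<in> {..<n}"
    have "cnj (G $$ (i,k)) * G $$ (i,k) = complex_of_real ((cmod (G $$ (i,k)))\<^sup>2)" by (rule cnj_mult_self)
    also have "(cmod (G $$ (i,k)))\<^sup>2 = (\<sigma> k)\<^sup>2 * (cmod (C $$ (i,k)))\<^sup>2"
      using i k by (simp add: Gi norm_mult power_mult_distrib)
    finally show "cnj (G $$ (i,k)) * G $$ (i,k) = complex_of_real ((\<sigma> k)\<^sup>2 * (cmod (C $$ (i,k)))\<^sup>2)" .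
  qed
  finally have "Re (mtrace (conj_transpose G * G)) = (\<Sum>k<K. \<Sum>i<n. (\<sigma> k)\<^sup>2 * (cmod (C $$ (i,k)))\<^sup>2)"
    by (simp add: Re_sum)
  then show ?thesis unfolding G_def by (simp add: sum_distrib_left)
qed

lemma integrand_eq:
  assumes g: "good n m ends w \<kappa> \<tau>" and om: "\<omega> \<noteq> 0"
  shows "Re (mtrace (conj_transpose (transfer s n m ends w \<tau> \<sigma> \<omega>) * transfer s n m ends w \<tau> \<sigma> \<omega>)) =
    (\<Sum>k<nK s n m. (\<sigma> k)\<^sup>2 * fk s n m ends w \<tau> k \<omega>)"
proof -
  have C: "Rm n m ends w \<tau> \<omega> * Ym s n m ends w \<in> carrier_mat n (nK s n m)"
    using Rm_props(3)[OF g om] by (rule mult_carrier_mat) simp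
  show ?thesis
    unfolding transfer_eq[OF g om] trace_formula[OF C] fk_def using om by simp
qed

lemma centering_colsum: "0 < n \<Longrightarrow> j < n \<Longrightarrow> (\<Sum>i<n. centering n $$ (i,j)) = 0"
  by (simp add: centering_index sum_subtractf)

lemma Ym_colsum:
  assumes n: "0 < n" and k: "k < nK s n m"
  shows "(\<Sum>i<n. Ym s n m ends w $$ (i,k)) = 0"
proof -
  let ?B = "noise_input s n m ends w"
  have B: "?B \<in> carrier_mat n (nK s n m)" by (rule noise_input_carrier)
  have Y: "Ym s n m ends w = cmat (centering n * ?B)"
    unfolding Ym_def by (rule cmat_mult[symmetric, OF centering_carrier(1) B])
  have "(\<Sum>i<n. (centering n * ?B) $$ (i,k)) = (\<Sum>i<n. \<Sum>l<n. centering n $$ (i,l) * ?B $$ (l,k))"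
    using B k by (intro sum.cong refl) (simp add: scalar_prod_def atLeast0LessThan carrier_matD)
  also have "\<dots> = (\<Sum>l<n. (\<Sum>i<n. centering n $$ (i,l)) * ?B $$ (l,k))"
    by (subst sum.swap) (simp add: sum_distrib_right)
  also have "\<dots> = 0" using n by (intro sum.neutral) (simp add: centering_colsum)
  finally have "(\<Sum>i<n. (centering n * ?B) $$ (i,k)) = 0" .
  then have "complex_of_real (\<Sum>i<n. (centering n * ?B) $$ (i,k)) = 0" by simp
  then show ?thesis
    unfolding Y of_real_sum using B k by (simp add: cmat_def carrier_matD)
qed

definition Ynorm :: "uncertainty \<Rightarrow> nat \<Rightarrow> nat \<Rightarrow> (nat \<Rightarrow> nat \<times> nat) \<Rightarrow> (nat \<Rightarrow> real) \<Rightarrow> nat \<Rightarrow> real" where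
  "Ynorm s n m ends w k = (\<Sum>i<n. (cmod (Ym s n m ends w $$ (i,k)))\<^sup>2)"

lemma fk_nonneg: "0 \<le> fk s n m ends w \<tau> k \<omega>"
  unfolding fk_def by (auto intro: sum_nonneg)

lemma fk_bound:
  assumes g: "good n m ends w \<kappa> \<tau>" and om: "\<omega> \<noteq> 0" and k: "k < nK s n m"
  shows "(\<kappa>\<^sup>2 + \<omega>\<^sup>2 / 2) * fk s n m ends w \<tau> k \<omega> \<le> Ynorm s n m ends w k"
proof -
  have gg: "valid_graph n m ends" "\<And>e. e < m \<Longrightarrow> 0 \<le> w e" "0 < \<kappa>"
    "\<And>x. (\<Sum>i<n. x i) = 0 \<Longrightarrow> \<kappa> * (\<Sum>i<n. (cmod (x i))\<^sup>2) \<le> Qf m ends w x"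
    "0 \<le> \<tau>" "\<tau> * (2 * (\<Sum>e<m. w e)) \<le> 1/4" "0 < n"
    using g unfolding good_def by auto
  note RP = Rm_props[OF g om]
  let ?Z = "Rm n m ends w \<tau> \<omega> * Ym s n m ends w"
  have Z: "?Z \<in> carrier_mat n (nK s n m)" using RP(3) by (rule mult_carrier_mat) simp
  have XZ: "Xm n m ends w \<tau> \<omega> * ?Z = Ym s n m ends w"
    using RP Ym_carrier[THEN carrier_matD(1), of s n m ends w]
    by (simp add: assoc_mult_mat[symmetric, of _ n n _ n _ "nK s n m"])
  have eq: "\<And>i. i < n \<Longrightarrow> \<i> * complex_of_real \<omega> * ?Z $$ (i,k) +
        exp (- complex_of_real \<tau> * (\<i> * complex_of_real \<omega>)) *
          (\<Sum>j<n. complex_of_real (laplacian n m ends w $$ (i,j)) * ?Z $$ (j,k)) = Ym s n m ends w $$ (i,k)"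
  proof -
    fix i assume i: "i < n"
    show "\<i> * complex_of_real \<omega> * ?Z $$ (i,k) +
        exp (- complex_of_real \<tau> * (\<i> * complex_of_real \<omega>)) *
          (\<Sum>j<n. complex_of_real (laplacian n m ends w $$ (i,j)) * ?Z $$ (j,k)) = Ym s n m ends w $$ (i,k)"
      using Xm_mult_index[OF Z i k, of m ends w \<tau> \<omega>] XZ by simp
  qed
  have "(\<kappa>\<^sup>2 + \<omega>\<^sup>2 / 2) * (\<Sum>i<n. (cmod (?Z $$ (i,k)))\<^sup>2) \<le> (\<Sum>i<n. (cmod (Ym s n m ends w $$ (i,k)))\<^sup>2)"
    by (rule key_bound(2)[OF gg(1,2,4) less_imp_le[OF gg(3)] eq Ym_colsum[OF gg(7) k] om gg(5,6)])
  then show ?thesis unfolding fk_def Ynorm_def using om by simp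
qed


lemma tendsto_det:
  fixes A :: "'b \<Rightarrow> complex mat"
  assumes A: "\<And>t. A t \<in> carrier_mat n n" and B: "B \<in> carrier_mat n n"
    and lim: "\<And>i j. i < n \<Longrightarrow> j < n \<Longrightarrow> ((\<lambda>t. A t $$ (i,j)) \<longlongrightarrow> B $$ (i,j)) F"
  shows "((\<lambda>t. det (A t)) \<longlongrightarrow> det B) F"
proof -
  have eq: "(\<lambda>t. det (A t)) = (\<lambda>t. \<Sum>p\<in>{p. p permutes {0..<n}}. signof p * (\<Prod>i=0..<n. A t $$ (i, p i)))"
    by (rule ext) (rule det_def'[OF A])
  show ?thesis unfolding eq det_def'[OF B]
  proof (intro tendsto_sum tendsto_mult tendsto_const tendsto_prod)
    fix p i assume p: "p \<in> {p. p permutes {0..<n}}" and i: "i \<in> {0..<n}"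
    have "p i \<in> {0..<n}" using p i by (simp add: permutes_in_image)
    then show "((\<lambda>t. A t $$ (i, p i)) \<longlongrightarrow> B $$ (i, p i)) F" using i by (intro lim) auto
  qed
qed

lemma tendsto_cofactor:
  fixes A :: "'b \<Rightarrow> complex mat"
  assumes A: "\<And>t. A t \<in> carrier_mat n n" and B: "B \<in> carrier_mat n n"
    and lim: "\<And>i j. i < n \<Longrightarrow> j < n \<Longrightarrow> ((\<lambda>t. A t $$ (i,j)) \<longlongrightarrow> B $$ (i,j)) F"
    and a: "a < n" and b: "b < n"
  shows "((\<lambda>t. cofactor (A t) a b) \<longlongrightarrow> cofactor B a b) F"
  unfolding cofactor_def
proof (intro tendsto_mult tendsto_const tendsto_det)
  show "\<And>t. mat_delete (A t) a b \<in> carrier_mat (n - 1) (n - 1)" using A by (rule mat_delete_carrier)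
  show "mat_delete B a b \<in> carrier_mat (n - 1) (n - 1)" using B by (rule mat_delete_carrier)
  fix i j assume i: "i < n - 1" and j: "j < n - 1"
  have dA: "\<And>t. dim_row (A t) = n" "\<And>t. dim_col (A t) = n" using A by (auto simp: carrier_matD)
  have dB: "dim_row B = n" "dim_col B = n" using B by (auto simp: carrier_matD)
  show "((\<lambda>t. mat_delete (A t) a b $$ (i, j)) \<longlongrightarrow> mat_delete B a b $$ (i, j)) F"
    unfolding mat_delete_def using i j dA dB by (simp add: lim)
qed

lemma inv_adj:
  assumes A: "A \<in> carrier_mat n n" and d: "det A \<noteq> (0::complex)" and i: "i < n" and j: "j < n"
  shows "the (mat_inverse A) $$ (i,j) = cofactor A j i / det A"
proof -
  obtain R where R: "mat_inverse A = Some R" "A * R = 1\<^sub>m n" "R * A = 1\<^sub>m n" "R \<in> carrier_mat n n"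
    using inv_exists[OF A d] by blast
  have adj: "adj_mat A \<in> carrier_mat n n" "A * adj_mat A = det A \<cdot>\<^sub>m 1\<^sub>m n" using adj_mat[OF A] by auto
  have "adj_mat A = (R * A) * adj_mat A" using R(3) adj(1) by simp
  also have "\<dots> = R * (A * adj_mat A)" using R(4) A adj(1) by (rule assoc_mult_mat)
  also have "\<dots> = det A \<cdot>\<^sub>m R" unfolding adj(2) using R(4)
    by (simp add: mult_smult_distrib[of R n n "1\<^sub>m n" n])
  finally have "adj_mat A $$ (i,j) = det A * R $$ (i,j)" using i j R(4) by simp
  moreover have "adj_mat A $$ (i,j) = cofactor A j i" using A i j by (simp add: adj_mat_def carrier_matD)
  ultimately have "R $$ (i,j) * det A = cofactor A j i" by (simp add: mult.commute)
  then show ?thesis using R(1) d by (simp add: field_simps)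
qed


lemma tendsto_inv_entry:
  fixes A :: "'b \<Rightarrow> complex mat"
  assumes A: "\<And>t. A t \<in> carrier_mat n n" and B: "B \<in> carrier_mat n n"
    and lim: "\<And>i j. i < n \<Longrightarrow> j < n \<Longrightarrow> ((\<lambda>t. A t $$ (i,j)) \<longlongrightarrow> B $$ (i,j)) F"
    and d: "det B \<noteq> 0" and i: "i < n" and j: "j < n"
  shows "((\<lambda>t. the (mat_inverse (A t)) $$ (i,j)) \<longlongrightarrow> the (mat_inverse B) $$ (i,j)) F"
proof -
  have dlim: "((\<lambda>t. det (A t)) \<longlongrightarrow> det B) F" by (rule tendsto_det[OF A B lim])
  have ev: "eventually (\<lambda>t. det (A t) \<noteq> 0) F" by (rule tendsto_imp_eventually_ne[OF dlim d])
  have "((\<lambda>t. cofactor (A t) j i / det (A t)) \<longlongrightarrow> cofactor B j i / det B) F"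
    by (intro tendsto_divide tendsto_cofactor[OF A B lim] dlim d j i)
  moreover have "eventually (\<lambda>t. cofactor (A t) j i / det (A t) = the (mat_inverse (A t)) $$ (i,j)) F"
    using ev by eventually_elim (simp add: inv_adj[OF A _ i j])
  ultimately have "((\<lambda>t. the (mat_inverse (A t)) $$ (i,j)) \<longlongrightarrow> cofactor B j i / det B) F"
    by (rule Lim_transform_eventually)
  then show ?thesis by (simp add: inv_adj[OF B d i j])
qed

lemma Rm_carrier_det: "det (Xm n m ends w \<tau> \<omega>) \<noteq> 0 \<Longrightarrow> Rm n m ends w \<tau> \<omega> \<in> carrier_mat n n"
  using inv_exists[OF Xm_carrier(1)] unfolding Rm_def by fastforce

lemma fk_expand:
  assumes R: "Rm n m ends w \<tau> \<omega> \<in> carrier_mat n n" and om: "\<omega> \<noteq> 0" and k: "k < nK s n m"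
  shows "fk s n m ends w \<tau> k \<omega> =
    (\<Sum>i<n. (cmod (\<Sum>l<n. Rm n m ends w \<tau> \<omega> $$ (i,l) * Ym s n m ends w $$ (l,k)))\<^sup>2)"
proof -
  have "fk s n m ends w \<tau> k \<omega> = (\<Sum>i<n. (cmod ((Rm n m ends w \<tau> \<omega> * Ym s n m ends w) $$ (i,k)))\<^sup>2)"
    using om by (simp add: fk_def)
  also have "\<dots> = (\<Sum>i<n. (cmod (\<Sum>l<n. Rm n m ends w \<tau> \<omega> $$ (i,l) * Ym s n m ends w $$ (l,k)))\<^sup>2)"
  proof (intro sum.cong refl)
    fix i assume i: "i \<in> {..<n}"
    have d: "dim_row (Rm n m ends w \<tau> \<omega>) = n" "dim_col (Rm n m ends w \<tau> \<omega>) = n" "dim_col (Ym s n m ends w) = nK s n m"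
      "dim_row (Ym s n m ends w) = n"
      using R by (auto simp: carrier_matD)
    show "(cmod ((Rm n m ends w \<tau> \<omega> * Ym s n m ends w) $$ (i,k)))\<^sup>2 =
      (cmod (\<Sum>l<n. Rm n m ends w \<tau> \<omega> $$ (i,l) * Ym s n m ends w $$ (l,k)))\<^sup>2"
      using i k d by (simp add: index_mult_mat scalar_prod_def atLeast0LessThan)
  qed
  finally show ?thesis .
qed

lemma Xm_entry_tendsto:
  assumes tf: "(\<tau>f \<longlongrightarrow> \<tau>0) F" and wf: "(\<omega>f \<longlongrightarrow> \<omega>0) F" and i: "i < n" and j: "j < n"
  shows "((\<lambda>t. Xm n m ends w (\<tau>f t) (\<omega>f t) $$ (i,j)) \<longlongrightarrow> Xm n m ends w \<tau>0 \<omega>0 $$ (i,j)) F"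
  unfolding Xm_index[OF i j]
  by (cases "i = j") (simp_all, (intro tendsto_intros tf wf)+)

lemma fk_tendsto:
  assumes g: "good n m ends w \<kappa> \<tau>0" and om: "\<omega>0 \<noteq> 0" and k: "k < nK s n m"
    and tf: "(\<tau>f \<longlongrightarrow> \<tau>0) F" and wf: "(\<omega>f \<longlongrightarrow> \<omega>0) F"
  shows "((\<lambda>t. fk s n m ends w (\<tau>f t) k (\<omega>f t)) \<longlongrightarrow> fk s n m ends w \<tau>0 k \<omega>0) F"
proof -
  define Xf where "Xf = (\<lambda>t. Xm n m ends w (\<tau>f t) (\<omega>f t))"
  define X0 where "X0 = Xm n m ends w \<tau>0 \<omega>0"
  have lim: "\<And>i j. i < n \<Longrightarrow> j < n \<Longrightarrow> ((\<lambda>t. Xf t $$ (i,j)) \<longlongrightarrow> X0 $$ (i,j)) F"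
    unfolding Xf_def X0_def by (rule Xm_entry_tendsto[OF tf wf])
  have d0: "det X0 \<noteq> 0" unfolding X0_def by (rule Xm_det_ne[OF g om])
  have XC: "\<And>t. Xf t \<in> carrier_mat n n" "X0 \<in> carrier_mat n n" unfolding Xf_def X0_def by simp_all
  have dlim: "((\<lambda>t. det (Xf t)) \<longlongrightarrow> det X0) F"
    by (rule tendsto_det[OF XC lim])
  have ev: "eventually (\<lambda>t. det (Xf t) \<noteq> 0 \<and> \<omega>f t \<noteq> 0) F"
    using tendsto_imp_eventually_ne[OF dlim d0] tendsto_imp_eventually_ne[OF wf om]
    by (rule eventually_conj)
  have Rlim: "\<And>i l. i < n \<Longrightarrow> l < n \<Longrightarrow>
      ((\<lambda>t. Rm n m ends w (\<tau>f t) (\<omega>f t) $$ (i,l)) \<longlongrightarrow> Rm n m ends w \<tau>0 \<omega>0 $$ (i,l)) F"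
    using tendsto_inv_entry[OF XC lim d0] unfolding Rm_def Xf_def X0_def by blast
  have "((\<lambda>t. \<Sum>i<n. (cmod (\<Sum>l<n. Rm n m ends w (\<tau>f t) (\<omega>f t) $$ (i,l) * Ym s n m ends w $$ (l,k)))\<^sup>2)
      \<longlongrightarrow> (\<Sum>i<n. (cmod (\<Sum>l<n. Rm n m ends w \<tau>0 \<omega>0 $$ (i,l) * Ym s n m ends w $$ (l,k)))\<^sup>2)) F"
    by (intro tendsto_intros Rlim) auto
  moreover have "eventually (\<lambda>t. (\<Sum>i<n. (cmod (\<Sum>l<n. Rm n m ends w (\<tau>f t) (\<omega>f t) $$ (i,l) * Ym s n m ends w $$ (l,k)))\<^sup>2)
      = fk s n m ends w (\<tau>f t) k (\<omega>f t)) F"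
    using ev unfolding Xf_def by eventually_elim (simp add: fk_expand[OF Rm_carrier_det _ k])
  ultimately have "((\<lambda>t. fk s n m ends w (\<tau>f t) k (\<omega>f t))
      \<longlongrightarrow> (\<Sum>i<n. (cmod (\<Sum>l<n. Rm n m ends w \<tau>0 \<omega>0 $$ (i,l) * Ym s n m ends w $$ (l,k)))\<^sup>2)) F"
    by (rule Lim_transform_eventually)
  then show ?thesis using d0 unfolding X0_def by (simp add: fk_expand[OF Rm_carrier_det om k])
qed


lemma fk_zero[simp]: "fk s n m ends w \<tau> k 0 = 0"
  by (simp add: fk_def)

lemma fk_measurable:
  assumes g: "good n m ends w \<kappa> \<tau>" and k: "k < nK s n m"
  shows "fk s n m ends w \<tau> k \<in> borel_measurable lborel"
proof -
  have c: "continuous_on (- {0}) (fk s n m ends w \<tau> k)"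
  proof (intro continuous_at_imp_continuous_on ballI)
    fix x :: real assume "x \<in> - {0}"
    then have x: "x \<noteq> 0" by simp
    have "((\<lambda>t. fk s n m ends w ((\<lambda>_. \<tau>) t) k ((\<lambda>t. t) t)) \<longlongrightarrow> fk s n m ends w \<tau> k x) (at x)"
      by (rule fk_tendsto[OF g x k]) (auto intro: tendsto_ident_at)
    then show "isCont (fk s n m ends w \<tau> k) x" by (simp add: isCont_def)
  qed
  have "(\<lambda>x. if x \<in> - {0} then fk s n m ends w \<tau> k x else (\<lambda>_. 0::real) x) \<in> borel_measurable borel"
    by (rule borel_measurable_continuous_on_if) (use c in auto)
  moreover have "(\<lambda>x. if x \<in> - {0} then fk s n m ends w \<tau> k x else (\<lambda>_. 0::real) x) = fk s n m ends w \<tau> k"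
    by (rule ext) auto
  ultimately show ?thesis by simp
qed

lemma integrable_inv_sq: "integrable lborel (\<lambda>x::real. inverse (1 + x\<^sup>2))"
  using integrable_inverse_1_plus_square unfolding set_integrable_def by simp

lemma fk_dom:
  assumes g: "good n m ends w \<kappa> \<tau>" and k: "k < nK s n m"
  shows "fk s n m ends w \<tau> k \<omega> \<le> (Ynorm s n m ends w k / min (\<kappa>\<^sup>2) (1/2)) * inverse (1 + \<omega>\<^sup>2)"
proof -
  have kp: "0 < \<kappa>" using g by (simp add: good_def)
  define \<beta> where "\<beta> = min (\<kappa>\<^sup>2) (1/2)"
  have bp: "0 < \<beta>" using kp by (simp add: \<beta>_def)
  have Y0: "0 \<le> Ynorm s n m ends w k" by (simp add: Ynorm_def sum_nonneg)
  show ?thesis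
  proof (cases "\<omega> = 0")
    case True then show ?thesis using Y0 bp by (simp add: \<beta>_def[symmetric])
  next
    case False
    have b1: "\<beta> * (1 + \<omega>\<^sup>2) \<le> \<kappa>\<^sup>2 + \<omega>\<^sup>2 / 2"
    proof -
      have "\<beta> \<le> \<kappa>\<^sup>2" "\<beta> \<le> 1/2" by (simp_all add: \<beta>_def)
      then have "\<beta> * \<omega>\<^sup>2 \<le> \<omega>\<^sup>2 / 2" by (simp add: mult_right_mono[of \<beta> "1/2" "\<omega>\<^sup>2", simplified])
      then show ?thesis using \<open>\<beta> \<le> \<kappa>\<^sup>2\<close> by (simp add: algebra_simps)
    qed
    have p: "0 < \<beta> * (1 + \<omega>\<^sup>2)" using bp by (simp add: add_pos_nonneg)
    have "\<beta> * (1 + \<omega>\<^sup>2) * fk s n m ends w \<tau> k \<omega> \<le> (\<kappa>\<^sup>2 + \<omega>\<^sup>2 / 2) * fk s n m ends w \<tau> k \<omega>"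
      by (rule mult_right_mono[OF b1 fk_nonneg])
    also have "\<dots> \<le> Ynorm s n m ends w k" by (rule fk_bound[OF g False k])
    finally have "fk s n m ends w \<tau> k \<omega> \<le> Ynorm s n m ends w k / (\<beta> * (1 + \<omega>\<^sup>2))"
      using p by (simp add: pos_le_divide_eq mult.commute)
    then show ?thesis unfolding \<beta>_def[symmetric] by (simp add: field_simps)
  qed
qed

lemma fk_integrable:
  assumes g: "good n m ends w \<kappa> \<tau>" and k: "k < nK s n m"
  shows "integrable lborel (fk s n m ends w \<tau> k)"
proof (rule Bochner_Integration.integrable_bound)
  show "integrable lborel (\<lambda>x. (Ynorm s n m ends w k / min (\<kappa>\<^sup>2) (1/2)) * inverse (1 + x\<^sup>2))"
    using integrable_inv_sq by simp
  show "fk s n m ends w \<tau> k \<in> borel_measurable lborel" by (rule fk_measurable[OF g k])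
  have kp: "0 < \<kappa>" using g by (simp add: good_def)
  have Y0: "0 \<le> Ynorm s n m ends w k" by (simp add: Ynorm_def sum_nonneg)
  show "AE x in lborel. norm (fk s n m ends w \<tau> k x) \<le> norm ((Ynorm s n m ends w k / min (\<kappa>\<^sup>2) (1/2)) * inverse (1 + x\<^sup>2))"
  proof (rule AE_I2)
    fix x :: real
    have "0 \<le> (Ynorm s n m ends w k / min (\<kappa>\<^sup>2) (1/2)) * inverse (1 + x\<^sup>2)"
      using Y0 kp by (intro mult_nonneg_nonneg divide_nonneg_pos) (auto simp: add_pos_nonneg)
    then have e: "norm ((Ynorm s n m ends w k / min (\<kappa>\<^sup>2) (1/2)) * inverse (1 + x\<^sup>2)) =
       (Ynorm s n m ends w k / min (\<kappa>\<^sup>2) (1/2)) * inverse (1 + x\<^sup>2)"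
      by (simp only: real_norm_def abs_of_nonneg)
    have e2: "norm (fk s n m ends w \<tau> k x) = fk s n m ends w \<tau> k x"
      using fk_nonneg[of s n m ends w \<tau> k x] by simp
    show "norm (fk s n m ends w \<tau> k x) \<le> norm ((Ynorm s n m ends w k / min (\<kappa>\<^sup>2) (1/2)) * inverse (1 + x\<^sup>2))"
      unfolding e e2 by (rule fk_dom[OF g k])
  qed
qed


definition Ik :: "uncertainty \<Rightarrow> nat \<Rightarrow> nat \<Rightarrow> (nat \<Rightarrow> nat \<times> nat) \<Rightarrow> (nat \<Rightarrow> real) \<Rightarrow> real \<Rightarrow> nat \<Rightarrow> real" where
  "Ik s n m ends w \<tau> k = integral\<^sup>L lborel (fk s n m ends w \<tau> k)"

lemma rho_formula:
  assumes g: "good n m ends w \<kappa> \<tau>"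
  shows "rho_ss s n m ends w \<tau> \<sigma> = 1 / (2 * pi) * (\<Sum>k<nK s n m. (\<sigma> k)\<^sup>2 * Ik s n m ends w \<tau> k)"
proof -
  define G where "G = (\<lambda>\<omega>. \<Sum>k<nK s n m. (\<sigma> k)\<^sup>2 * fk s n m ends w \<tau> k \<omega>)"
  have "integral UNIV (\<lambda>\<omega>::real. Re (mtrace (conj_transpose (transfer s n m ends w \<tau> \<sigma> \<omega>) * transfer s n m ends w \<tau> \<sigma> \<omega>)))
      = integral UNIV G"
    by (rule integral_spike[of "{0}"]) (auto simp: G_def integrand_eq[OF g])
  also have Gi: "integrable lborel G"
    unfolding G_def
    apply (rule Bochner_Integration.integrable_sum)
    apply (rule Bochner_Integration.integrable_mult_right)
    apply (rule fk_integrable[OF g])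
    by simp
  from Gi have "integral UNIV G = integral\<^sup>L lborel G" by (rule integral_lborel)
  also have "\<dots> = (\<Sum>k<nK s n m. (\<sigma> k)\<^sup>2 * Ik s n m ends w \<tau> k)"
    unfolding G_def Ik_def
    by (subst Bochner_Integration.integral_sum) (auto intro: fk_integrable[OF g])
  finally show ?thesis unfolding rho_ss_def by simp
qed

lemma centrality_formula:
  assumes g: "good n m ends w \<kappa> \<tau>" and k: "k < nK s n m"
  shows "centrality s n m ends w \<tau> k = Ik s n m ends w \<tau> k / (2 * pi)"
proof -
  define A where "A = (\<Sum>j<nK s n m. Ik s n m ends w \<tau> j)"
  have eq: "rho_ss s n m ends w \<tau> ((\<lambda>_. 1)(k := sqrt v)) = 1 / (2 * pi) * (A + (v - 1) * Ik s n m ends w \<tau> k)"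
    if v: "v \<in> {0<..}" for v :: real
  proof -
    have "(\<Sum>j<nK s n m. (((\<lambda>_. 1)(k := sqrt v)) j)\<^sup>2 * Ik s n m ends w \<tau> j) =
        (\<Sum>j<nK s n m. Ik s n m ends w \<tau> j + (if j = k then (v - 1) * Ik s n m ends w \<tau> j else 0))"
      using v by (intro sum.cong refl) (auto simp: algebra_simps)
    also have "\<dots> = A + (v - 1) * Ik s n m ends w \<tau> k"
      using k by (simp add: sum.distrib A_def)
    finally show ?thesis by (simp add: rho_formula[OF g])
  qed
  have "((\<lambda>v. 1 / (2 * pi) * (A + (v - 1) * Ik s n m ends w \<tau> k)) has_field_derivative
      1 / (2 * pi) * Ik s n m ends w \<tau> k) (at 1)"
    by (auto intro!: derivative_eq_intros)
  then have "((\<lambda>v. rho_ss s n m ends w \<tau> ((\<lambda>_. 1)(k := sqrt v))) has_field_derivative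
      1 / (2 * pi) * Ik s n m ends w \<tau> k) (at 1)"
    by (rule has_field_derivative_transform_within_open[of _ _ _ "{0<..}"]) (auto simp: eq)
  then show ?thesis unfolding centrality_def by (simp add: DERIV_imp_deriv)
qed


definition pw :: "uncertainty \<Rightarrow> nat" where
  "pw s = (if s = Dynamics \<or> s = Measurement then 0 else 1)"

lemma lap_scale: "laplacian n m ends (\<lambda>e. \<alpha> * w e) = \<alpha> \<cdot>\<^sub>m laplacian n m ends w"
  by (rule eq_matI) (auto simp: laplacian_index sum_distrib_left mult_ac)

lemma degree_scale: "degree_mat n m ends (\<lambda>e. \<alpha> * w e) = \<alpha> \<cdot>\<^sub>m degree_mat n m ends w"
  by (rule eq_matI) (auto simp: degree_mat_def mat_diag_def sum_distrib_left mult_delta_right cong: if_cong)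

lemma noise_scale:
  "noise_input s n m ends (\<lambda>e. \<alpha> * w e) = (\<alpha> ^ pw s) \<cdot>\<^sub>m noise_input s n m ends w"
proof (cases s)
  case Dynamics then show ?thesis by (auto simp: noise_input_def pw_def intro!: eq_matI)
next
  case Sensor then show ?thesis by (simp add: noise_input_def pw_def lap_scale)
next
  case Receiver then show ?thesis by (simp add: noise_input_def pw_def degree_scale)
next
  case Emitter then show ?thesis
    by (auto simp: noise_input_def pw_def degree_scale lap_scale adjacency_mat_def algebra_simps
        intro!: eq_matI)
next
  case Communication then show ?thesis
    by (auto simp: noise_input_def pw_def weight_mat_def mat_diag_def scalar_prod_def mult_delta_right
        cong: if_cong intro!: eq_matI)
next
  case Measurement then show ?thesis by (auto simp: noise_input_def pw_def intro!: eq_matI)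
qed

lemma cmat_smult: "cmat (c \<cdot>\<^sub>m A) = complex_of_real c \<cdot>\<^sub>m cmat A"
  by (rule eq_matI) (auto simp: cmat_def)

lemma Ym_scale: "Ym s n m ends (\<lambda>e. \<alpha> * w e) = complex_of_real (\<alpha> ^ pw s) \<cdot>\<^sub>m Ym s n m ends w"
proof -
  have B: "cmat (noise_input s n m ends w) \<in> carrier_mat n (nK s n m)"
    using noise_input_carrier[of s n m ends w] by (intro carrier_matI) (simp_all add: carrier_matD)
  show ?thesis
    unfolding Ym_def noise_scale cmat_smult
    by (rule mult_smult_distrib[OF cmat_centering_carrier B])
qed

lemma smult_mult_smult:
  fixes A B :: "'a::comm_ring_1 mat"
  assumes A: "A \<in> carrier_mat nr n" and B: "B \<in> carrier_mat n nc"
  shows "(c \<cdot>\<^sub>m A) * (d \<cdot>\<^sub>m B) = (c * d) \<cdot>\<^sub>m (A * B)"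
  using A B by (intro eq_matI) (auto simp: scalar_prod_def sum_distrib_left mult_ac)

lemma inv_smult:
  assumes A: "A \<in> carrier_mat n n" and d: "det A \<noteq> (0::complex)" and c: "c \<noteq> 0"
  shows "the (mat_inverse (c \<cdot>\<^sub>m A)) = (1 / c) \<cdot>\<^sub>m the (mat_inverse A)"
proof -
  obtain R where R: "mat_inverse A = Some R" "A * R = 1\<^sub>m n" "R * A = 1\<^sub>m n" "R \<in> carrier_mat n n"
    using inv_exists[OF A d] by blast
  have cA: "c \<cdot>\<^sub>m A \<in> carrier_mat n n" using A by simp
  have dc: "det (c \<cdot>\<^sub>m A) \<noteq> 0" using d c A by (simp add: carrier_matD)
  obtain R' where R': "mat_inverse (c \<cdot>\<^sub>m A) = Some R'" "(c \<cdot>\<^sub>m A) * R' = 1\<^sub>m n"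
    "R' * (c \<cdot>\<^sub>m A) = 1\<^sub>m n" "R' \<in> carrier_mat n n"
    using inv_exists[OF cA dc] by blast
  have one: "(c \<cdot>\<^sub>m A) * ((1 / c) \<cdot>\<^sub>m R) = 1\<^sub>m n"
    using smult_mult_smult[OF A R(4), of c "1/c"] c R(2) by (auto intro!: eq_matI)
  have "R' = R' * ((c \<cdot>\<^sub>m A) * ((1 / c) \<cdot>\<^sub>m R))" using one R'(4) by simp
  also have "\<dots> = (R' * (c \<cdot>\<^sub>m A)) * ((1 / c) \<cdot>\<^sub>m R)"
    using R'(4) cA R(4) by (simp add: assoc_mult_mat[of _ n n _ n _ n])
  also have "\<dots> = (1 / c) \<cdot>\<^sub>m R" using R'(3) R(4) by simp
  finally show ?thesis using R(1) R'(1) by simp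
qed

lemma Xm_scale:
  assumes a: "\<alpha> \<noteq> 0"
  shows "Xm n m ends (\<lambda>e. \<alpha> * w e) \<tau> \<omega> = complex_of_real \<alpha> \<cdot>\<^sub>m Xm n m ends w (\<alpha> * \<tau>) (\<omega> / \<alpha>)"
proof -
  have e: "complex_of_real (\<alpha> * \<tau>) * (\<i> * complex_of_real (\<omega> / \<alpha>)) = complex_of_real \<tau> * (\<i> * complex_of_real \<omega>)"
    using a by (simp add: field_simps)
  have e2: "complex_of_real \<alpha> * (\<i> * complex_of_real (\<omega> / \<alpha>)) = \<i> * complex_of_real \<omega>"
    using a by (simp add: field_simps)
  show ?thesis
  proof (rule eq_matI)
    fix i j assume ij: "i < dim_row (complex_of_real \<alpha> \<cdot>\<^sub>m Xm n m ends w (\<alpha> * \<tau>) (\<omega> / \<alpha>))"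
      "j < dim_col (complex_of_real \<alpha> \<cdot>\<^sub>m Xm n m ends w (\<alpha> * \<tau>) (\<omega> / \<alpha>))"
    then have i: "i < n" and j: "j < n" by auto
    have "Xm n m ends (\<lambda>e. \<alpha> * w e) \<tau> \<omega> $$ (i,j) =
      (if i = j then \<i> * complex_of_real \<omega> else 0) +
      exp (- complex_of_real \<tau> * (\<i> * complex_of_real \<omega>)) * (complex_of_real \<alpha> * complex_of_real (laplacian n m ends w $$ (i,j)))"
      using i j by (simp add: Xm_index lap_scale)
    also have "\<dots> = complex_of_real \<alpha> * ((if i = j then \<i> * complex_of_real (\<omega> / \<alpha>) else 0) +
      exp (- complex_of_real (\<alpha> * \<tau>) * (\<i> * complex_of_real (\<omega> / \<alpha>))) * complex_of_real (laplacian n m ends w $$ (i,j)))"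
      using e e2 by (simp add: distrib_left mult_ac)
    also have "\<dots> = (complex_of_real \<alpha> \<cdot>\<^sub>m Xm n m ends w (\<alpha> * \<tau>) (\<omega> / \<alpha>)) $$ (i,j)"
      using i j by (simp add: Xm_index)
    finally show "Xm n m ends (\<lambda>e. \<alpha> * w e) \<tau> \<omega> $$ (i,j) = (complex_of_real \<alpha> \<cdot>\<^sub>m Xm n m ends w (\<alpha> * \<tau>) (\<omega> / \<alpha>)) $$ (i,j)" .
  qed auto
qed

lemma fk_scale:
  assumes g: "good n m ends w \<kappa> (\<alpha> * \<tau>)" and a: "0 < \<alpha>" and k: "k < nK s n m"
  shows "fk s n m ends (\<lambda>e. \<alpha> * w e) \<tau> k \<omega> = (\<alpha> ^ pw s / \<alpha>)\<^sup>2 * fk s n m ends w (\<alpha> * \<tau>) k (\<omega> / \<alpha>)"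
proof (cases "\<omega> = 0")
  case True then show ?thesis by simp
next
  case False
  then have om: "\<omega> / \<alpha> \<noteq> 0" using a by simp
  let ?R = "Rm n m ends w (\<alpha> * \<tau>) (\<omega> / \<alpha>)" and ?Y = "Ym s n m ends w"
  have d: "det (Xm n m ends w (\<alpha> * \<tau>) (\<omega> / \<alpha>)) \<noteq> 0" by (rule Xm_det_ne[OF g om])
  have R: "?R \<in> carrier_mat n n" by (rule Rm_props(3)[OF g om])
  have Ra: "Rm n m ends (\<lambda>e. \<alpha> * w e) \<tau> \<omega> = (1 / complex_of_real \<alpha>) \<cdot>\<^sub>m ?R"
    unfolding Rm_def Xm_scale[OF less_imp_neq[OF a, symmetric]]
    by (rule inv_smult[OF Xm_carrier(1) d]) (use a in simp)
  have P: "Rm n m ends (\<lambda>e. \<alpha> * w e) \<tau> \<omega> * Ym s n m ends (\<lambda>e. \<alpha> * w e) =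
      complex_of_real (\<alpha> ^ pw s / \<alpha>) \<cdot>\<^sub>m (?R * ?Y)"
    unfolding Ra Ym_scale using smult_mult_smult[OF R Ym_carrier] by simp
  have "fk s n m ends (\<lambda>e. \<alpha> * w e) \<tau> k \<omega> =
      (\<Sum>i<n. (cmod (complex_of_real (\<alpha> ^ pw s / \<alpha>) * (?R * ?Y) $$ (i,k)))\<^sup>2)"
    using False unfolding fk_def P
    by (simp, intro sum.cong refl) (use k R in \<open>simp add: carrier_matD\<close>)
  also have "\<dots> = (\<Sum>i<n. (\<alpha> ^ pw s / \<alpha>)\<^sup>2 * (cmod ((?R * ?Y) $$ (i,k)))\<^sup>2)"
    by (intro sum.cong refl) (simp only: norm_mult norm_of_real power_mult_distrib power2_abs)
  also have "\<dots> = (\<alpha> ^ pw s / \<alpha>)\<^sup>2 * (\<Sum>i<n. (cmod ((?R * ?Y) $$ (i,k)))\<^sup>2)"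
    by (simp add: sum_distrib_left)
  also have "\<dots> = (\<alpha> ^ pw s / \<alpha>)\<^sup>2 * fk s n m ends w (\<alpha> * \<tau>) k (\<omega> / \<alpha>)"
    using om by (simp add: fk_def)
  finally show ?thesis .
qed

lemma Ik_scale:
  assumes g: "good n m ends w \<kappa> (\<alpha> * \<tau>)" and a: "0 < \<alpha>" and k: "k < nK s n m"
  shows "Ik s n m ends (\<lambda>e. \<alpha> * w e) \<tau> k = (\<alpha> ^ pw s / \<alpha>)\<^sup>2 * \<alpha> * Ik s n m ends w (\<alpha> * \<tau>) k"
proof -
  let ?f = "fk s n m ends w (\<alpha> * \<tau>) k"
  have "Ik s n m ends (\<lambda>e. \<alpha> * w e) \<tau> k = (\<integral>\<omega>. (\<alpha> ^ pw s / \<alpha>)\<^sup>2 * ?f (\<omega> / \<alpha>) \<partial>lborel)"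
  proof -
    have "fk s n m ends (\<lambda>e. \<alpha> * w e) \<tau> k = (\<lambda>\<omega>. (\<alpha> ^ pw s / \<alpha>)\<^sup>2 * ?f (\<omega> / \<alpha>))"
      by (rule ext) (rule fk_scale[OF g a k])
    then show ?thesis unfolding Ik_def by simp
  qed
  also have "\<dots> = (\<alpha> ^ pw s / \<alpha>)\<^sup>2 * (\<integral>\<omega>. ?f (\<omega> / \<alpha>) \<partial>lborel)" by simp
  also have "(\<integral>\<omega>. ?f (\<omega> / \<alpha>) \<partial>lborel) = \<bar>\<alpha>\<bar> *\<^sub>R (\<integral>x. ?f ((0 + \<alpha> * x) / \<alpha>) \<partial>lborel)"
    by (rule lborel_integral_real_affine) (use a in simp)
  also have "\<dots> = \<alpha> * Ik s n m ends w (\<alpha> * \<tau>) k" using a by (simp add: Ik_def)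
  finally show ?thesis by (simp add: mult_ac)
qed


lemma Ik_limit:
  assumes gt: "\<And>t. 0 \<le> t \<Longrightarrow> t \<le> \<delta> \<Longrightarrow> good n m ends w \<kappa> t"
    and dp: "0 < \<delta>" and tp: "0 < \<tau>" and k: "k < nK s n m"
  shows "((\<lambda>\<alpha>. Ik s n m ends w (\<alpha> * \<tau>) k) \<longlongrightarrow> Ik s n m ends w 0 k) (at_right 0)"
proof (rule tendsto_at_right_sequentially[where b = "\<delta> / \<tau>"])
  show "0 < \<delta> / \<tau>" using dp tp by simp
  fix S :: "nat \<Rightarrow> real"
  assume S: "\<And>i. 0 < S i" "\<And>i. S i < \<delta> / \<tau>" "decseq S" "S \<longlonglongrightarrow> 0"
  have gS: "good n m ends w \<kappa> (S i * \<tau>)" for i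
  proof (rule gt)
    show "0 \<le> S i * \<tau>" using S(1)[of i] tp by simp
    show "S i * \<tau> \<le> \<delta>" using S(2)[of i] tp by (simp add: pos_less_divide_eq less_imp_le)
  qed
  have g0: "good n m ends w \<kappa> 0" using gt dp by simp
  define Cb where "Cb = Ynorm s n m ends w k / min (\<kappa>\<^sup>2) (1/2)"
  have kp: "0 < \<kappa>" using g0 by (simp add: good_def)
  have Cb0: "0 \<le> Cb" unfolding Cb_def using kp by (intro divide_nonneg_pos) (auto simp: Ynorm_def sum_nonneg)
  have "(\<lambda>i. integral\<^sup>L lborel (fk s n m ends w (S i * \<tau>) k)) \<longlonglongrightarrow> integral\<^sup>L lborel (fk s n m ends w 0 k)"
  proof (rule integral_dominated_convergence[where w = "\<lambda>x. Cb * inverse (1 + x\<^sup>2)"])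
    show "fk s n m ends w 0 k \<in> borel_measurable lborel" by (rule fk_measurable[OF g0 k])
    show "fk s n m ends w (S i * \<tau>) k \<in> borel_measurable lborel" for i by (rule fk_measurable[OF gS k])
    show "integrable lborel (\<lambda>x. Cb * inverse (1 + x\<^sup>2))" using integrable_inv_sq by simp
    show "AE x in lborel. (\<lambda>i. fk s n m ends w (S i * \<tau>) k x) \<longlonglongrightarrow> fk s n m ends w 0 k x"
      using AE_lborel_singleton[of 0]
    proof (rule AE_mp, intro AE_I2 impI)
      fix x :: real assume x: "x \<noteq> 0"
      have "(\<lambda>i. S i * \<tau>) \<longlonglongrightarrow> 0 * \<tau>" by (intro tendsto_intros S(4))
      then have "(\<lambda>i. S i * \<tau>) \<longlonglongrightarrow> 0" by simp
      then show "(\<lambda>i. fk s n m ends w (S i * \<tau>) k x) \<longlonglongrightarrow> fk s n m ends w 0 k x"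
        using fk_tendsto[OF g0 x k, where \<tau>f = "\<lambda>i. S i * \<tau>" and F = sequentially and \<omega>f = "\<lambda>_. x"] by simp
    qed
    show "AE x in lborel. norm (fk s n m ends w (S i * \<tau>) k x) \<le> Cb * inverse (1 + x\<^sup>2)" for i
    proof (rule AE_I2)
      fix x :: real
      show "norm (fk s n m ends w (S i * \<tau>) k x) \<le> Cb * inverse (1 + x\<^sup>2)"
        using fk_dom[OF gS[of i] k, where \<omega> = x] fk_nonneg[of s n m ends w "S i * \<tau>" k x] unfolding Cb_def by simp
    qed
  qed
  then show "(\<lambda>i. Ik s n m ends w (S i * \<tau>) k) \<longlonglongrightarrow> Ik s n m ends w 0 k" unfolding Ik_def .
qed

lemma eig_bound:
  assumes v: "valid_graph n m ends" and w: "\<And>e. e < m \<Longrightarrow> 0 \<le> w e"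
    and ev: "eigenvalue (laplacian n m ends w) \<mu>"
  shows "\<mu> \<le> 2 * (\<Sum>e<m. w e)"
proof -
  obtain u where u: "u \<in> carrier_vec n" "u \<noteq> 0\<^sub>v n" "laplacian n m ends w *\<^sub>v u = \<mu> \<cdot>\<^sub>v u"
    using ev unfolding eigenvalue_def eigenvector_def by auto
  define x where "x = (\<lambda>i. complex_of_real (u $ i))"
  define S where "S = (\<Sum>i<n. (u $ i)\<^sup>2)"
  have Lu: "(\<Sum>j<n. laplacian n m ends w $$ (i,j) * u $ j) = \<mu> * u $ i" if i: "i < n" for i
  proof -
    have "(laplacian n m ends w *\<^sub>v u) $ i = \<mu> * u $ i" using u(3) u(1) i by simp
    then show ?thesis using u(1) i by (simp add: scalar_prod_def atLeast0LessThan)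
  qed
  have "(\<Sum>i<n. \<Sum>j<n. u $ i * of_real (laplacian n m ends w $$ (i,j)) * u $ j) = \<mu> * S"
  proof -
    have "(\<Sum>i<n. \<Sum>j<n. u $ i * of_real (laplacian n m ends w $$ (i,j)) * u $ j) =
       (\<Sum>i<n. u $ i * (\<Sum>j<n. laplacian n m ends w $$ (i,j) * u $ j))"
      by (simp add: sum_distrib_left mult_ac)
    also have "\<dots> = (\<Sum>i<n. \<mu> * (u $ i)\<^sup>2)" by (intro sum.cong refl) (simp add: Lu power2_eq_square)
    finally show ?thesis by (simp add: S_def sum_distrib_left)
  qed
  moreover have "(\<Sum>i<n. \<Sum>j<n. u $ i * of_real (laplacian n m ends w $$ (i,j)) * u $ j) = Qf m ends w x"
    unfolding quad_form[OF v] Qf_def x_def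
    by (intro sum.cong refl) (simp add: power2_eq_square flip: of_real_diff)
  moreover have "Qf m ends w x \<le> 2 * (\<Sum>e<m. w e) * S"
    using Qf_upper[OF v w, where x = x] by (simp add: x_def S_def)
  ultimately have le: "\<mu> * S \<le> 2 * (\<Sum>e<m. w e) * S" by simp
  have "S > 0"
  proof (rule ccontr)
    assume "\<not> S > 0"
    then have "S = 0" unfolding S_def by (meson order.antisym not_less sum_nonneg zero_le_power2)
    then have "\<forall>i\<in>{..<n}. (u $ i)\<^sup>2 = 0" unfolding S_def by (subst (asm) sum_nonneg_eq_0_iff) auto
    then have "u = 0\<^sub>v n" using u(1) by (intro eq_vecI) auto
    with u(2) show False by simp
  qed
  with le show ?thesis by simp
qed

lemma order_transfer:
  fixes f g :: "nat \<Rightarrow> real"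
  assumes f: "\<forall>i<N. \<forall>j<N. f i > f j \<longleftrightarrow> i < j"
    and fg: "\<And>i j. i < N \<Longrightarrow> j < N \<Longrightarrow> f j < f i \<Longrightarrow> g j < g i"
  shows "\<forall>i<N. \<forall>j<N. g i > g j \<longleftrightarrow> i < j"
proof (intro allI impI)
  fix i j assume i: "i < N" and j: "j < N"
  show "g i > g j \<longleftrightarrow> i < j"
  proof (cases i j rule: linorder_cases)
    case less then show ?thesis using f fg i j by auto
  next
    case equal then show ?thesis by simp
  next
    case greater
    then have "f j > f i" using f i j by auto
    then have "g j > g i" using fg i j by auto
    then show ?thesis using greater by auto
  qed
qed


theorem theorem12:
  fixes n m :: nat and ends :: "nat \<Rightarrow> nat \<times> nat" and w :: "nat \<Rightarrow> real"
    and s :: uncertainty and \<tau> :: real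
  assumes graph: "connected_weighted_graph n m ends w"
    and tau_pos: "0 < \<tau>"
    and agents0: "agent_associated s \<Longrightarrow>
      \<forall>i<n. \<forall>j<n. centrality s n m ends w 0 i > centrality s n m ends w 0 j \<longleftrightarrow> i < j"
    and links0: "link_associated s \<Longrightarrow>
      \<forall>e<m. \<forall>f<m. centrality s n m ends w 0 e > centrality s n m ends w 0 f \<longleftrightarrow> e < f"
  shows "\<exists>\<alpha>>0.
     (\<forall>\<mu>. eigenvalue (laplacian n m ends (\<lambda>e. \<alpha> * w e)) \<mu> \<longrightarrow> \<tau> * \<mu> < pi / 2) \<and>
     (agent_associated s \<longrightarrow>
        (\<forall>i<n. \<forall>j<n. centrality s n m ends (\<lambda>e. \<alpha> * w e) \<tau> i
                       > centrality s n m ends (\<lambda>e. \<alpha> * w e) \<tau> j \<longleftrightarrow> i < j)) \<and>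
     (link_associated s \<longrightarrow>
        (\<forall>e<m. \<forall>f<m. centrality s n m ends (\<lambda>e. \<alpha> * w e) \<tau> e
                       > centrality s n m ends (\<lambda>e. \<alpha> * w e) \<tau> f \<longleftrightarrow> e < f))"
proof -
  have v: "valid_graph n m ends" and n0: "0 < n" and pos: "\<And>e. e < m \<Longrightarrow> 0 < w e"
    using graph unfolding connected_weighted_graph_def valid_graph_def by auto
  define W where "W = (\<Sum>e<m. w e)"
  have W0: "0 \<le> W" unfolding W_def using pos by (intro sum_nonneg) (auto intro: less_imp_le)
  define \<delta> where "\<delta> = 1 / (8 * W + 1)"
  have dp: "0 < \<delta>" unfolding \<delta>_def using W0 by simp
  have dW: "\<delta> * (2 * W) \<le> 1/4" unfolding \<delta>_def using W0 by (simp add: field_simps)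
  obtain \<kappa> where kp: "\<kappa> > 0"
    and kap: "\<forall>x. (\<Sum>i<n. x i) = 0 \<longrightarrow> \<kappa> * (\<Sum>i<n. (cmod (x i))\<^sup>2) \<le> Qf m ends w x"
    using kappa_exists[OF graph] by blast
  have gt: "good n m ends w \<kappa> t" if "0 \<le> t" "t \<le> \<delta>" for t
  proof -
    have "t * (2 * W) \<le> \<delta> * (2 * W)" using that W0 by (intro mult_right_mono) auto
    then show ?thesis unfolding good_def using v n0 pos kp kap that dW W_def
      by (auto intro: less_imp_le)
  qed
  let ?K = "nK s n m"
  have lim: "\<And>k. k < ?K \<Longrightarrow> ((\<lambda>\<alpha>. Ik s n m ends w (\<alpha> * \<tau>) k) \<longlongrightarrow> Ik s n m ends w 0 k) (at_right 0)"
    by (rule Ik_limit[OF gt dp tau_pos]) auto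
  have c0: "\<And>k. k < ?K \<Longrightarrow> centrality s n m ends w 0 k = Ik s n m ends w 0 k / (2 * pi)"
    by (rule centrality_formula[OF gt[of 0]]) (use dp in auto)
  define P where "P = {(i,j). i < ?K \<and> j < ?K \<and> Ik s n m ends w 0 j < Ik s n m ends w 0 i}"
  have fP: "finite P" unfolding P_def by (rule finite_subset[of _ "{..<?K} \<times> {..<?K}"]) auto
  have ev1: "eventually (\<lambda>\<alpha>. \<forall>p\<in>P. Ik s n m ends w (\<alpha> * \<tau>) (snd p) < Ik s n m ends w (\<alpha> * \<tau>) (fst p)) (at_right 0)"
  proof (rule eventually_ball_finite[OF fP], intro ballI)
    fix p assume p: "p \<in> P"
    obtain i j where ij: "p = (i,j)" "i < ?K" "j < ?K" "Ik s n m ends w 0 j < Ik s n m ends w 0 i"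
      using p unfolding P_def by auto
    have "((\<lambda>\<alpha>. Ik s n m ends w (\<alpha> * \<tau>) i - Ik s n m ends w (\<alpha> * \<tau>) j) \<longlongrightarrow>
        Ik s n m ends w 0 i - Ik s n m ends w 0 j) (at_right 0)"
      by (intro tendsto_diff lim ij)
    moreover have "0 < Ik s n m ends w 0 i - Ik s n m ends w 0 j" using ij by simp
    ultimately have "eventually (\<lambda>\<alpha>. 0 < Ik s n m ends w (\<alpha> * \<tau>) i - Ik s n m ends w (\<alpha> * \<tau>) j) (at_right 0)"
      by (rule order_tendstoD(1))
    then show "eventually (\<lambda>\<alpha>. Ik s n m ends w (\<alpha> * \<tau>) (snd p) < Ik s n m ends w (\<alpha> * \<tau>) (fst p)) (at_right 0)"
      by eventually_elim (simp add: ij)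
  qed
  have ev2: "eventually (\<lambda>\<alpha>. \<alpha> \<in> {0<..<\<delta> / \<tau>}) (at_right (0::real))"
    by (rule eventually_at_right_real) (use dp tau_pos in simp)
  obtain \<alpha> where a: "\<alpha> \<in> {0<..<\<delta> / \<tau>}"
    and aP: "\<forall>p\<in>P. Ik s n m ends w (\<alpha> * \<tau>) (snd p) < Ik s n m ends w (\<alpha> * \<tau>) (fst p)"
    using eventually_happens'[OF _ eventually_conj[OF ev2 ev1]] by auto
  have ap: "0 < \<alpha>" using a by simp
  have at: "\<alpha> * \<tau> \<le> \<delta>" using a tau_pos by (simp add: pos_less_divide_eq less_imp_le)
  have at0: "0 \<le> \<alpha> * \<tau>" using ap tau_pos by simp
  have atW: "\<tau> * (2 * (\<alpha> * W)) \<le> 1/4"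
  proof -
    have "\<tau> * (2 * (\<alpha> * W)) = (\<alpha> * \<tau>) * (2 * W)" by (simp add: mult_ac)
    also have "\<dots> \<le> \<delta> * (2 * W)" using at W0 by (intro mult_right_mono) auto
    finally show ?thesis using dW by simp
  qed
  have graph_a: "connected_weighted_graph n m ends (\<lambda>e. \<alpha> * w e)"
    using graph ap unfolding connected_weighted_graph_def by auto
  obtain \<kappa>a where kap_a: "\<kappa>a > 0"
    "\<forall>x. (\<Sum>i<n. x i) = 0 \<longrightarrow> \<kappa>a * (\<Sum>i<n. (cmod (x i))\<^sup>2) \<le> Qf m ends (\<lambda>e. \<alpha> * w e) x"
    using kappa_exists[OF graph_a] by blast
  have sumW: "(\<Sum>e<m. \<alpha> * w e) = \<alpha> * W" unfolding W_def by (simp add: sum_distrib_left)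
  have ga: "good n m ends (\<lambda>e. \<alpha> * w e) \<kappa>a \<tau>"
    unfolding good_def sumW using v n0 pos ap kap_a tau_pos atW by (auto intro: less_imp_le)
  define Ka where "Ka = (\<alpha> ^ pw s / \<alpha>)\<^sup>2 * \<alpha>"
  have Kap: "0 < Ka" unfolding Ka_def using ap by simp
  have ca: "\<And>k. k < ?K \<Longrightarrow> centrality s n m ends (\<lambda>e. \<alpha> * w e) \<tau> k =
      Ka * Ik s n m ends w (\<alpha> * \<tau>) k / (2 * pi)"
    using centrality_formula[OF ga] Ik_scale[OF gt[OF at0 at] ap] unfolding Ka_def by simp
  have transfer_ok: "\<And>i j. i < ?K \<Longrightarrow> j < ?K \<Longrightarrow>
      centrality s n m ends w 0 j < centrality s n m ends w 0 i \<Longrightarrow>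
      centrality s n m ends (\<lambda>e. \<alpha> * w e) \<tau> j < centrality s n m ends (\<lambda>e. \<alpha> * w e) \<tau> i"
  proof -
    fix i j assume i: "i < ?K" and j: "j < ?K"
      and c: "centrality s n m ends w 0 j < centrality s n m ends w 0 i"
    have "Ik s n m ends w 0 j < Ik s n m ends w 0 i" using c c0[OF i] c0[OF j]
      by (simp add: divide_strict_right_mono_neg pi_gt_zero divide_less_cancel)
    then have "(i,j) \<in> P" unfolding P_def using i j by simp
    then have "Ik s n m ends w (\<alpha> * \<tau>) j < Ik s n m ends w (\<alpha> * \<tau>) i" using aP by auto
    then have "Ka * Ik s n m ends w (\<alpha> * \<tau>) j < Ka * Ik s n m ends w (\<alpha> * \<tau>) i" using Kap by simp
    then show "centrality s n m ends (\<lambda>e. \<alpha> * w e) \<tau> j < centrality s n m ends (\<lambda>e. \<alpha> * w e) \<tau> i"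
      using ca[OF i] ca[OF j] by (simp add: divide_strict_right_mono pi_gt_zero)
  qed
  show ?thesis
  proof (intro exI[of _ \<alpha>] conjI ap allI impI[of "eigenvalue _ _"])
    fix \<mu> assume ev: "eigenvalue (laplacian n m ends (\<lambda>e. \<alpha> * w e)) \<mu>"
    have nn: "\<And>e. e < m \<Longrightarrow> 0 \<le> \<alpha> * w e" using pos ap by (simp add: less_imp_le)
    have "\<mu> \<le> 2 * (\<alpha> * W)"
      using eig_bound[OF v nn ev] sumW by simp
    then have "\<tau> * \<mu> \<le> \<tau> * (2 * (\<alpha> * W))" using tau_pos by simp
    also have "\<dots> \<le> 1/4" by (rule atW)
    also have "\<dots> < pi / 2" using pi_gt3 by simp
    finally show "\<tau> * \<mu> < pi / 2" .
  next
    show "agent_associated s \<longrightarrow> (\<forall>i<n. \<forall>j<n. centrality s n m ends (\<lambda>e. \<alpha> * w e) \<tau> i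
                       > centrality s n m ends (\<lambda>e. \<alpha> * w e) \<tau> j \<longleftrightarrow> i < j)"
    proof
    assume ag: "agent_associated s"
    then have K: "?K = n" by (auto simp: nK_def agent_associated_def link_associated_def)
    show "\<forall>i<n. \<forall>j<n. centrality s n m ends (\<lambda>e. \<alpha> * w e) \<tau> i
                       > centrality s n m ends (\<lambda>e. \<alpha> * w e) \<tau> j \<longleftrightarrow> i < j"
      by (rule order_transfer[OF agents0[OF ag]]) (use transfer_ok K in auto)
    qed
  next
    show "link_associated s \<longrightarrow> (\<forall>e<m. \<forall>f<m. centrality s n m ends (\<lambda>e. \<alpha> * w e) \<tau> e
                       > centrality s n m ends (\<lambda>e. \<alpha> * w e) \<tau> f \<longleftrightarrow> e < f)"
    proof
    assume li: "link_associated s"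
    then have K: "?K = m" by (auto simp: nK_def)
    show "\<forall>e<m. \<forall>f<m. centrality s n m ends (\<lambda>e. \<alpha> * w e) \<tau> e
                       > centrality s n m ends (\<lambda>e. \<alpha> * w e) \<tau> f \<longleftrightarrow> e < f"
      by (rule order_transfer[OF links0[OF li]]) (use transfer_ok K in auto)
    qed
  qed
qed

end
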